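(* There exists a family of $n$-bit communication problems $F_n:\{0,1\}^n\times\{0,1\}^n\to\{0,1\}$ with $\mathsf{PP}(F_n)=O(\log n)$ and $\mathrm{rect}(F_n)^{-1}=2^{\Omega(n)}$. In particular, $\mathsf{D}^{\mathsf{NP}}(F_n)=\Omega(n)$, and the communication class $\mathsf{PP}$ is not contained in the communication class $\mathsf{P}^{\mathsf{NP}}$.
   Context: For a Boolean matrix $F\in\{0,1\}^{\mathcal X\times\mathcal Y}$: a monochromatic rectangle is a set $S\times T$ ($S\subseteq\mathcal X,T\subseteq\mathcal Y$) on which $F$ is constant, and $\mathrm{rect}(F)=\max_R |R|/|\mathcal X\times\mathcal Y|$ over monochromatic rectangles $R$. A deterministic protocol is a binary tree whose internal nodes are owned by Alice (labelled by a function of $x$ into $\{0,1\}$) or Bob (a function of $y$); the leaf reached on $(x,y)$ gives the output; cost is the height. A nondeterministic protocol is a family of deterministic protocols $\pi_a$ indexed by advice strings $a\in\{0,1\}^k$, computing $F$ if $F(x,y)=1\iff\exists a:\pi_a(x,y)=1$, with cost $k$ plus the maximum cost of the $\pi_a$; $\mathsf{N}(F)$ is the minimum such cost. An oracle protocol is a deterministic protocol tree in which some internal nodes $v$ are instead labelled by a triple $(P_v,a_v,b_v)$, where $P_v$ is a Boolean matrix on some $\mathcal X'\times\mathcal Y'$, $a_v:\mathcal X\to\mathcal X'$, $b_v:\mathcal Y\to\mathcal Y'$, and the branch taken at $v$ is $P_v(a_v(x),b_v(y))$. The $\mathsf{D}^{\mathsf{NP}}$ cost of a root-to-leaf path is the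 number of communicated bits on it plus $\sum_v \mathsf{N}(P_v)$ over oracle nodes $v$ on it; the cost of the protocol is the maximum over paths, and $\mathsf{D}^{\mathsf{NP}}(F)$ is the minimum cost of an oracle protocol computing $F$. A public-coin randomized protocol is a probability distribution over deterministic protocols (chosen using shared randomness), with cost the maximum cost of the protocols in the support; $\mathsf{R}_\epsilon(F)$ is the minimum cost of such a protocol whose output differs from $F(x,y)$ with probability at most $\epsilon$ for every input $(x,y)$. Define $\mathsf{PP}(F)=\min_{\epsilon<1/2}\big(\mathsf{R}_\epsilon(F)+\log_2\frac{1}{1/2-\epsilon}\big)$. The class $\mathsf{PP}$ (resp. $\mathsf{P}^{\mathsf{NP}}$) consists of families of $n$-bit problems $F_n$ (matrices with $\lceil\log_2\max(|\mathcal X|,|\mathcal Y|)\rceil=n$) with $\mathsf{PP}(F_n)$ (resp. $\mathsf{D}^{\mathsf{NP}}(F_n)$) bounded by a polylogarithmic function of $n$. *)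

theory Defs
  imports "HOL-Probability.Probability_Mass_Function" "HOL-Library.Extended_Real"
begin

definition bits :: "nat \<Rightarrow> bool list set" where
  "bits n = {xs. length xs = n}"

text \<open>Oracle nodes carry a Boolean matrix P on the
carrier A \<times> B (A, B sets of naturals) and maps a, b of the inputs into A, B.\<close>
datatype ('x, 'y) proto =
    Leaf bool
  | Alice "'x \<Rightarrow> bool" "('x, 'y) proto" "('x, 'y) proto"
  | Bob "'y \<Rightarrow> bool" "('x, 'y) proto" "('x, 'y) proto"
  | Oracle "nat set" "nat set" "nat \<Rightarrow> nat \<Rightarrow> bool" "'x \<Rightarrow> nat" "'y \<Rightarrow> nat"
      "('x, 'y) proto" "('x, 'y) proto"

fun eval :: "('x, 'y) proto \<Rightarrow> 'x \<Rightarrow> 'y \<Rightarrow> bool" where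
  "eval (Leaf b) x y = b"
| "eval (Alice f l r) x y = (if f x then eval r x y else eval l x y)"
| "eval (Bob g l r) x y = (if g y then eval r x y else eval l x y)"
| "eval (Oracle A B P a b l r) x y = (if P (a x) (b y) then eval r x y else eval l x y)"

fun plain :: "('x, 'y) proto \<Rightarrow> bool" where
  "plain (Leaf b) = True"
| "plain (Alice f l r) = (plain l \<and> plain r)"
| "plain (Bob g l r) = (plain l \<and> plain r)"
| "plain (Oracle A B P a b l r) = False"

fun depth :: "('x, 'y) proto \<Rightarrow> nat" where
  "depth (Leaf b) = 0"
| "depth (Alice f l r) = Suc (max (depth l) (depth r))"
| "depth (Bob g l r) = Suc (max (depth l) (depth r))"
| "depth (Oracle A B P a b l r) = Suc (max (depth l) (depth r))"

definition nd_protocol ::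
  "'x set \<Rightarrow> 'y set \<Rightarrow> ('x \<Rightarrow> 'y \<Rightarrow> bool) \<Rightarrow> nat \<Rightarrow> bool" where
  "nd_protocol X Y F m \<longleftrightarrow>
     (\<exists>k (\<pi> :: bool list \<Rightarrow> ('x, 'y) proto).
        (\<forall>a. length a = k \<longrightarrow> plain (\<pi> a) \<and> k + depth (\<pi> a) \<le> m) \<and>
        (\<forall>x\<in>X. \<forall>y\<in>Y. F x y \<longleftrightarrow> (\<exists>a. length a = k \<and> eval (\<pi> a) x y)))"

text \<open>Nondeterministic communication complexity N(F) (infinite if no protocol exists).\<close>
definition Ncost :: "'x set \<Rightarrow> 'y set \<Rightarrow> ('x \<Rightarrow> 'y \<Rightarrow> bool) \<Rightarrow> enat" where
  "Ncost X Y F = (INF m \<in> {m. nd_protocol X Y F m}. enat m)"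

fun wf_oracles :: "'x set \<Rightarrow> 'y set \<Rightarrow> ('x, 'y) proto \<Rightarrow> bool" where
  "wf_oracles X Y (Leaf b) = True"
| "wf_oracles X Y (Alice f l r) = (wf_oracles X Y l \<and> wf_oracles X Y r)"
| "wf_oracles X Y (Bob g l r) = (wf_oracles X Y l \<and> wf_oracles X Y r)"
| "wf_oracles X Y (Oracle A B P a b l r) =
     (a ` X \<subseteq> A \<and> b ` Y \<subseteq> B \<and> wf_oracles X Y l \<and> wf_oracles X Y r)"

fun npcost :: "('x, 'y) proto \<Rightarrow> enat" where
  "npcost (Leaf b) = 0"
| "npcost (Alice f l r) = 1 + max (npcost l) (npcost r)"
| "npcost (Bob g l r) = 1 + max (npcost l) (npcost r)"
| "npcost (Oracle A B P a b l r) = Ncost A B P + max (npcost l) (npcost r)"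

definition DNP :: "'x set \<Rightarrow> 'y set \<Rightarrow> ('x \<Rightarrow> 'y \<Rightarrow> bool) \<Rightarrow> enat" where
  "DNP X Y F = (INF T \<in> {T. wf_oracles X Y T \<and> (\<forall>x\<in>X. \<forall>y\<in>Y. eval T x y = F x y)}. npcost T)"

text \<open>Public-coin randomized protocol of cost at most c and error at most eps.\<close>
definition rand_protocol ::
  "'x set \<Rightarrow> 'y set \<Rightarrow> ('x \<Rightarrow> 'y \<Rightarrow> bool) \<Rightarrow> ('x, 'y) proto pmf \<Rightarrow> nat \<Rightarrow> real \<Rightarrow> bool" where
  "rand_protocol X Y F \<mu> c \<epsilon> \<longleftrightarrow>
     (\<forall>T\<in>set_pmf \<mu>. plain T \<and> depth T \<le> c) \<and>
     (\<forall>x\<in>X. \<forall>y\<in>Y. measure_pmf.prob \<mu> {T. eval T x y \<noteq> F x y} \<le> \<epsilon>)"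

definition PPcost :: "'x set \<Rightarrow> 'y set \<Rightarrow> ('x \<Rightarrow> 'y \<Rightarrow> bool) \<Rightarrow> real" where
  "PPcost X Y F = Inf {real c + log 2 (1 / (1/2 - \<epsilon>)) | c \<epsilon>.
       \<epsilon> < 1/2 \<and> (\<exists>\<mu>. rand_protocol X Y F \<mu> c \<epsilon>)}"

definition mono_rect :: "'x set \<Rightarrow> 'y set \<Rightarrow> ('x \<Rightarrow> 'y \<Rightarrow> bool) \<Rightarrow> 'x set \<Rightarrow> 'y set \<Rightarrow> bool" where
  "mono_rect X Y F S T \<longleftrightarrow> S \<subseteq> X \<and> T \<subseteq> Y \<and> (\<exists>b. \<forall>x\<in>S. \<forall>y\<in>T. F x y = b)"

definition rect :: "'x set \<Rightarrow> 'y set \<Rightarrow> ('x \<Rightarrow> 'y \<Rightarrow> bool) \<Rightarrow> real" where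
  "rect X Y F = Max {real (card (S \<times> T)) / real (card (X \<times> Y)) | S T. mono_rect X Y F S T}"

definition nbit_family :: "(nat \<Rightarrow> 'x set) \<Rightarrow> (nat \<Rightarrow> 'y set) \<Rightarrow> bool" where
  "nbit_family Xs Ys \<longleftrightarrow> (\<forall>n. finite (Xs n) \<and> finite (Ys n) \<and> Xs n \<noteq> {} \<and> Ys n \<noteq> {} \<and>
      \<lceil>log 2 (real (max (card (Xs n)) (card (Ys n))))\<rceil> = int n)"

definition in_PP :: "(nat \<Rightarrow> 'x set) \<Rightarrow> (nat \<Rightarrow> 'y set) \<Rightarrow> (nat \<Rightarrow> 'x \<Rightarrow> 'y \<Rightarrow> bool) \<Rightarrow> bool" where
  "in_PP Xs Ys F \<longleftrightarrow> nbit_family Xs Ys \<and>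
     (\<exists>C k. \<forall>n\<ge>2. PPcost (Xs n) (Ys n) (F n) \<le> C * (log 2 (real n)) ^ k)"

definition in_PNP :: "(nat \<Rightarrow> 'x set) \<Rightarrow> (nat \<Rightarrow> 'y set) \<Rightarrow> (nat \<Rightarrow> 'x \<Rightarrow> 'y \<Rightarrow> bool) \<Rightarrow> bool" where
  "in_PNP Xs Ys F \<longleftrightarrow> nbit_family Xs Ys \<and>
     (\<exists>C k. \<forall>n\<ge>2. ereal_of_enat (DNP (Xs n) (Ys n) (F n)) \<le> ereal (C * (log 2 (real n)) ^ k))"

end

theory Submission
  imports Defs
begin

definition dst :: "nat \<Rightarrow> bool list \<Rightarrow> bool list \<Rightarrow> nat" where
  "dst n x y = card {i. i < n \<and> x!i \<noteq> y!i}"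

definition Dn :: "nat \<Rightarrow> bool list \<Rightarrow> bool list" where
  "Dn i x = x[i := False]"

definition cmpr :: "nat \<Rightarrow> bool list set \<Rightarrow> bool list set" where
  "cmpr i S = Dn i ` {x\<in>S. Dn i x \<notin> S} \<union> {x\<in>S. Dn i x \<in> S}"

definition cross :: "nat \<Rightarrow> nat \<Rightarrow> bool list set \<Rightarrow> bool list set \<Rightarrow> bool" where
  "cross n r S T \<longleftrightarrow> (\<forall>x\<in>S. \<forall>y\<in>T. dst n x y \<le> r)"

lemma Dn_nth: "Dn i x ! j = (if i = j \<and> i < length x then False else x!j)"
  unfolding Dn_def by (cases "i < length x") (auto simp: nth_list_update list_update_beyond)

lemma dst_mono: "{i. i < n \<and> x!i \<noteq> y!i} \<subseteq> {i. i < n \<and> u!i \<noteq> v!i} \<Longrightarrow> dst n x y \<le> dst n u v"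
  unfolding dst_def by (rule card_mono) auto

lemma L1: "\<not> y!i \<Longrightarrow> dst n (Dn i x) y \<le> dst n x y"
  by (rule dst_mono) (auto simp: Dn_nth split: if_splits)

lemma L1': "\<not> x!i \<Longrightarrow> dst n x (Dn i y) \<le> dst n x y"
  by (rule dst_mono) (auto simp: Dn_nth split: if_splits)

lemma L2: "x!i \<Longrightarrow> y!i \<Longrightarrow> i < length x \<Longrightarrow> i < length y \<Longrightarrow> dst n (Dn i x) y = dst n x (Dn i y)"
  unfolding dst_def by (rule arg_cong[where f=card]) (auto simp: Dn_nth)

lemma L3: "length x = length y \<Longrightarrow> dst n (Dn i x) (Dn i y) \<le> dst n x y"
  by (rule dst_mono) (auto simp: Dn_nth split: if_splits)

lemma Dn_len[simp]: "length (Dn i x) = length x"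
  unfolding Dn_def by simp

lemma Dn_id: "\<not> x!i \<Longrightarrow> Dn i x = x"
  unfolding Dn_def by (metis list_update_id list_update_beyond not_le)

lemma comp_cross:
  assumes i: "i < n" and S: "S \<subseteq> bits n" and T: "T \<subseteq> bits n" and c: "cross n r S T"
  shows "cross n r (cmpr i S) (cmpr i T)"
  unfolding cross_def
proof (intro ballI)
  fix u v assume u: "u \<in> cmpr i S" and v: "v \<in> cmpr i T"
  have lenS: "\<And>x. x \<in> S \<Longrightarrow> length x = n" using S by (auto simp: bits_def)
  have lenT: "\<And>x. x \<in> T \<Longrightarrow> length x = n" using T by (auto simp: bits_def)
  have cc: "\<And>x y. x \<in> S \<Longrightarrow> y \<in> T \<Longrightarrow> dst n x y \<le> r" using c by (auto simp: cross_def)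
  from u consider (a) x where "x \<in> S" "u = Dn i x" | (b) "u \<in> S" "Dn i u \<in> S"
    unfolding cmpr_def by blast
  then show "dst n u v \<le> r"
  proof cases
    case a
    from v consider (c) y where "y \<in> T" "v = Dn i y" | (d) "v \<in> T" "Dn i v \<in> T"
      unfolding cmpr_def by blast
    then show ?thesis
    proof cases
      case c then show ?thesis using a L3[of x y n i] cc lenS lenT by fastforce
    next
      case d
      show ?thesis
      proof (cases "v!i")
        case True
        show ?thesis
        proof (cases "x!i")
          case True
          then show ?thesis using a d \<open>v!i\<close> L2[of x i v n] lenS lenT i cc by fastforce
        next
          case False
          then show ?thesis using a d Dn_id cc by fastforce
        qed
      next
        case False
        then show ?thesis using a d L1[of v i n x] cc by fastforce
      qed
    qed
  next
    case b
    from v consider (c) y where "y \<in> T" "v = Dn i y" | (d) "v \<in> T" "Dn i v \<in> T"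
      unfolding cmpr_def by blast
    then show ?thesis
    proof cases
      case c
      show ?thesis
      proof (cases "u!i")
        case True
        show ?thesis
        proof (cases "y!i")
          case True
          then show ?thesis using b c \<open>u!i\<close> L2[of u i y n] lenS lenT i cc by fastforce
        next
          case False
          then show ?thesis using b c Dn_id cc by fastforce
        qed
      next
        case False
        then show ?thesis using b c L1'[of u i n y] cc by fastforce
      qed
    next
      case d then show ?thesis using b cc by blast
    qed
  qed
qed

lemma finite_bits[simp]: "finite (bits n)"
proof -
  have "bits n = {xs. set xs \<subseteq> UNIV \<and> length xs = n}" by (auto simp: bits_def)
  then show ?thesis using finite_lists_length_eq[of "UNIV::bool set" n] by simp
qed

lemma card_bits: "card (bits n) = 2 ^ n"
proof -
  have "bits n = {xs. set xs \<subseteq> UNIV \<and> length xs = n}" by (auto simp: bits_def)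
  then show ?thesis using card_lists_length_eq[of "UNIV::bool set" n] by simp
qed

definition wt :: "bool list \<Rightarrow> nat" where
  "wt x = card {j. j < length x \<and> x!j}"

definition W :: "bool list set \<Rightarrow> nat" where
  "W S = (\<Sum>x\<in>S. wt x)"

lemma wt_Dn: "i < length x \<Longrightarrow> x!i \<Longrightarrow> wt (Dn i x) + 1 = wt x"
proof -
  assume a: "i < length x" "x!i"
  have e: "{j. j < length x \<and> x!j} = insert i {j. j < length (Dn i x) \<and> Dn i x!j}"
    using a by (auto simp: Dn_nth)
  have "i \<notin> {j. j < length (Dn i x) \<and> Dn i x!j}" by (simp add: Dn_nth)
  then show ?thesis unfolding wt_def e by simp
qed

lemma Dn_inj: "inj_on (Dn i) {x. i < length x \<and> x!i}"
proof (rule inj_onI)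
  fix x y assume x: "x \<in> {x. i < length x \<and> x!i}" and y: "y \<in> {x. i < length x \<and> x!i}"
    and e: "Dn i x = Dn i y"
  have l: "length x = length y" using e by (metis Dn_len)
  show "x = y"
  proof (rule nth_equalityI)
    show "length x = length y" by fact
    fix j assume "j < length x"
    show "x!j = y!j"
    proof (cases "j = i")
      case True then show ?thesis using x y by simp
    next
      case False
      have "Dn i x ! j = Dn i y ! j" using e by simp
      then show ?thesis using False by (simp add: Dn_nth)
    qed
  qed
qed

lemma comp_props:
  assumes S: "S \<subseteq> bits n" and i: "i < n"
  shows "cmpr i S \<subseteq> bits n" "card (cmpr i S) = card S"
    "W (cmpr i S) + card {x\<in>S. Dn i x \<notin> S} = W S"
proof -
  define M where "M = {x\<in>S. Dn i x \<notin> S}"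
  have fS: "finite S" using S finite_subset finite_bits by blast
  have fM: "finite M" using fS M_def by auto
  have Mi: "M \<subseteq> {x. i < length x \<and> x!i}"
  proof
    fix x assume "x \<in> M"
    then have "x \<in> S" "Dn i x \<notin> S" by (auto simp: M_def)
    then have "x!i" using Dn_id by fastforce
    moreover have "length x = n" using S \<open>x \<in> S\<close> by (auto simp: bits_def)
    ultimately show "x \<in> {x. i < length x \<and> x!i}" using i by simp
  qed
  have injM: "inj_on (Dn i) M" using Dn_inj Mi inj_on_subset by blast
  have c: "cmpr i S = Dn i ` M \<union> (S - M)" unfolding cmpr_def M_def by auto
  have disj: "Dn i ` M \<inter> (S - M) = {}" unfolding M_def by auto
  show "cmpr i S \<subseteq> bits n" using S unfolding cmpr_def bits_def by auto
  have "card (cmpr i S) = card (Dn i ` M) + card (S - M)"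
    unfolding c using disj fM fS by (simp add: card_Un_disjoint)
  also have "\<dots> = card M + (card S - card M)" using injM card_image fS fM
    by (simp add: M_def card_Diff_subset)
  also have "\<dots> = card S" using fS M_def card_mono by fastforce
  finally show "card (cmpr i S) = card S" .
  have "W (cmpr i S) = sum wt (Dn i ` M) + sum wt (S - M)"
    unfolding W_def c using disj fM fS by (simp add: sum.union_disjoint)
  also have "sum wt (Dn i ` M) = sum (wt \<circ> Dn i) M" using injM by (simp add: sum.reindex)
  finally have e1: "W (cmpr i S) = sum (wt \<circ> Dn i) M + sum wt (S - M)" .
  have "sum (wt \<circ> Dn i) M + card M = sum (\<lambda>x. wt (Dn i x) + 1) M" by (simp only: sum.distrib) simp
  also have "\<dots> = sum wt M" using Mi wt_Dn by (auto intro!: sum.cong)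
  finally have e2: "sum (wt \<circ> Dn i) M + card M = sum wt M" .
  have e3: "sum wt M + sum wt (S - M) = W S" unfolding W_def
    using fS M_def by (metis (no_types, lifting) mem_Collect_eq subsetI sum.subset_diff add.commute)
  show "W (cmpr i S) + card {x\<in>S. Dn i x \<notin> S} = W S"
    using e1 e2 e3 unfolding M_def[symmetric] by linarith
qed

definition valid_pair :: "nat \<Rightarrow> nat \<Rightarrow> nat \<Rightarrow> nat \<Rightarrow> bool list set \<times> bool list set \<Rightarrow> bool" where
  "valid_pair n r a b p \<longleftrightarrow> fst p \<subseteq> bits n \<and> snd p \<subseteq> bits n \<and> card (fst p) = a \<and> card (snd p) = b
     \<and> cross n r (fst p) (snd p)"

lemma downset_exists:
  assumes S: "S \<subseteq> bits n" and T: "T \<subseteq> bits n" and c: "cross n r S T"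
  shows "\<exists>S' T'. S' \<subseteq> bits n \<and> T' \<subseteq> bits n \<and> card S' = card S \<and> card T' = card T \<and>
     cross n r S' T' \<and> (\<forall>i<n. \<forall>x\<in>S'. Dn i x \<in> S') \<and> (\<forall>i<n. \<forall>y\<in>T'. Dn i y \<in> T')"
proof -
  let ?P = "valid_pair n r (card S) (card T)"
  have "?P (S, T)" using assms by (simp add: valid_pair_def)
  then obtain p where p: "?P p" and pmin: "\<And>q. ?P q \<Longrightarrow> W (fst p) + W (snd p) \<le> W (fst q) + W (snd q)"
    using ex_has_least_nat[of ?P "(S,T)" "\<lambda>p. W (fst p) + W (snd p)"] by auto
  obtain S' T' where pe: "p = (S', T')" by (cases p)
  have v: "S' \<subseteq> bits n" "T' \<subseteq> bits n" "card S' = card S" "card T' = card T" "cross n r S' T'"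
    using p pe by (auto simp: valid_pair_def)
  have key: "{x\<in>S'. Dn i x \<notin> S'} = {} \<and> {x\<in>T'. Dn i x \<notin> T'} = {}" if i: "i < n" for i
  proof -
    have q: "?P (cmpr i S', cmpr i T')"
      using comp_props[OF v(1) i] comp_props[OF v(2) i] comp_cross[OF i v(1) v(2) v(5)] v
      by (simp add: valid_pair_def)
    have "W S' + W T' \<le> W (cmpr i S') + W (cmpr i T')" using pmin[OF q] pe by simp
    moreover have "W (cmpr i S') + card {x\<in>S'. Dn i x \<notin> S'} = W S'" by (rule comp_props(3)[OF v(1) i])
    moreover have "W (cmpr i T') + card {x\<in>T'. Dn i x \<notin> T'} = W T'" by (rule comp_props(3)[OF v(2) i])
    ultimately have "card {x\<in>S'. Dn i x \<notin> S'} = 0" "card {x\<in>T'. Dn i x \<notin> T'} = 0" by linarith+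
    moreover have "finite {x\<in>S'. Dn i x \<notin> S'}" "finite {x\<in>T'. Dn i x \<notin> T'}"
      using finite_subset[OF v(1) finite_bits] finite_subset[OF v(2) finite_bits] by simp_all
    ultimately show ?thesis by simp
  qed
  have dS: "\<forall>i<n. \<forall>x\<in>S'. Dn i x \<in> S'"
  proof (intro allI impI ballI)
    fix i x assume "i < n" "x \<in> S'" then show "Dn i x \<in> S'" using key[OF \<open>i < n\<close>] by blast
  qed
  have dT: "\<forall>i<n. \<forall>x\<in>T'. Dn i x \<in> T'"
  proof (intro allI impI ballI)
    fix i x assume "i < n" "x \<in> T'" then show "Dn i x \<in> T'" using key[OF \<open>i < n\<close>] by blast
  qed
  show ?thesis
    apply (rule exI[of _ S'], rule exI[of _ T'])
    apply (rule conjI, fact v(1))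
    apply (rule conjI, fact v(2))
    apply (rule conjI, fact v(3))
    apply (rule conjI, fact v(4))
    apply (rule conjI, fact v(5))
    apply (rule conjI, fact dS)
    by (fact dT)
qed

definition clr :: "nat set \<Rightarrow> bool list \<Rightarrow> bool list" where
  "clr I x = map (\<lambda>j. x!j \<and> j \<notin> I) [0..<length x]"

lemma clr_len[simp]: "length (clr I x) = length x" by (simp add: clr_def)
lemma clr_nth: "j < length x \<Longrightarrow> clr I x ! j = (x!j \<and> j \<notin> I)" by (simp add: clr_def)

lemma clr_in:
  assumes fin: "finite I" and S: "S \<subseteq> bits n" and dc: "\<forall>i<n. \<forall>x\<in>S. Dn i x \<in> S" and x: "x \<in> S"
  shows "clr I x \<in> S"
  using fin
proof (induction I rule: finite_induct)
  case empty
  have "clr {} x = x" by (rule nth_equalityI) (auto simp: clr_nth)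
  then show ?case using x by simp
next
  case (insert i I)
  have lx: "length x = n" using S x by (auto simp: bits_def)
  show ?case
  proof (cases "i < n")
    case True
    have "clr (insert i I) x = Dn i (clr I x)"
      by (rule nth_equalityI) (auto simp: clr_nth Dn_nth lx)
    then show ?thesis using dc True insert.IH by simp
  next
    case False
    have "clr (insert i I) x = clr I x"
      by (rule nth_equalityI) (use False lx in \<open>auto simp: clr_nth\<close>)
    then show ?thesis using insert.IH by simp
  qed
qed

lemma union_small:
  assumes S: "S \<subseteq> bits n" and T: "T \<subseteq> bits n" and c: "cross n r S T"
    and dc: "\<forall>i<n. \<forall>x\<in>S. Dn i x \<in> S" and x: "x \<in> S" and y: "y \<in> T"
  shows "card {j. j < n \<and> (x!j \<or> y!j)} \<le> r"
proof -
  let ?u = "clr {j. j < n \<and> y!j} x"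
  have u: "?u \<in> S" by (rule clr_in[OF _ S dc x]) simp
  have lx: "length x = n" using S x by (auto simp: bits_def)
  have "dst n ?u y = card {j. j < n \<and> (x!j \<or> y!j)}"
    unfolding dst_def by (rule arg_cong[where f=card]) (auto simp: clr_nth lx)
  moreover have "dst n ?u y \<le> r" using c u y unfolding cross_def by blast
  ultimately show ?thesis by simp
qed

definition un :: "nat \<Rightarrow> bool list \<Rightarrow> bool list \<Rightarrow> nat" where
  "un n x y = card {j. j < n \<and> (x!j \<or> y!j)}"

lemma bits_Suc: "bits (Suc n) = (Cons True) ` bits n \<union> (Cons False) ` bits n"
proof
  show "bits (Suc n) \<subseteq> (Cons True) ` bits n \<union> (Cons False) ` bits n"
  proof
    fix x assume "x \<in> bits (Suc n)"
    then obtain b xs where "x = b # xs" "length xs = n" by (auto simp: bits_def length_Suc_conv)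
    then show "x \<in> (Cons True) ` bits n \<union> (Cons False) ` bits n" by (cases b) (auto simp: bits_def)
  qed
qed (auto simp: bits_def)

lemma sum_bits_Suc: "(\<Sum>x\<in>bits (Suc n). g x) = (\<Sum>x\<in>bits n. g (True#x) + g (False#x))"
proof -
  have d: "(Cons True) ` bits n \<inter> (Cons False) ` bits n = {}" by auto
  have "(\<Sum>x\<in>bits (Suc n). g x) = (\<Sum>x\<in>(Cons True) ` bits n. g x) + (\<Sum>x\<in>(Cons False) ` bits n. g x)"
    unfolding bits_Suc by (rule sum.union_disjoint) (simp_all add: d)
  also have "\<dots> = (\<Sum>x\<in>bits n. g (True#x)) + (\<Sum>x\<in>bits n. g (False#x))"
    by (simp add: sum.reindex)
  finally show ?thesis by (simp add: sum.distrib)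
qed

lemma un_Cons: "un (Suc n) (b#x) (c#y) = (if b \<or> c then 1 else 0) + un n x y"
proof -
  have e: "{j. j < Suc n \<and> ((b#x)!j \<or> (c#y)!j)} = {j. j = 0 \<and> (b \<or> c)} \<union> Suc ` {j. j < n \<and> (x!j \<or> y!j)}"
  proof (rule set_eqI)
    fix j
    show "j \<in> {j. j < Suc n \<and> ((b#x)!j \<or> (c#y)!j)} \<longleftrightarrow> j \<in> {j. j = 0 \<and> (b \<or> c)} \<union> Suc ` {j. j < n \<and> (x!j \<or> y!j)}"
      by (cases j) (simp_all add: inj_image_mem_iff)
  qed
  have "card ({j. j = 0 \<and> (b \<or> c)} \<union> Suc ` {j. j < n \<and> (x!j \<or> y!j)}) =
        card {j::nat. j = 0 \<and> (b \<or> c)} + card (Suc ` {j. j < n \<and> (x!j \<or> y!j)})"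
    by (rule card_Un_disjoint) auto
  moreover have "card {j::nat. j = 0 \<and> (b \<or> c)} = (if b \<or> c then 1 else 0)" by auto
  ultimately show ?thesis unfolding un_def e by (simp add: card_image)
qed

lemma gen_sum: "(\<Sum>x\<in>bits n. \<Sum>y\<in>bits n. (1/3::real)^(un n x y)) = 2^n"
proof (induction n)
  case 0
  have "bits 0 = {[]}" by (auto simp: bits_def)
  then show ?case by (simp add: un_def)
next
  case (Suc n)
  have "(\<Sum>x\<in>bits (Suc n). \<Sum>y\<in>bits (Suc n). (1/3::real)^(un (Suc n) x y))
      = (\<Sum>x\<in>bits n. \<Sum>y\<in>bits n. 2 * (1/3::real)^(un n x y))"
    by (simp add: sum_bits_Suc un_Cons sum.distrib[symmetric])
  also have "\<dots> = 2 * 2^n" using Suc.IH by (simp add: sum_distrib_left[symmetric])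
  finally show ?case by simp
qed

lemma pairs_bound:
  fixes r n :: nat
  defines "G \<equiv> {p \<in> bits n \<times> bits n. un n (fst p) (snd p) \<le> r}"
  shows "real (card G) \<le> 2^n * 3^r"
proof -
  have fG: "finite G" unfolding G_def by simp
  have "real (card G) * (1/3)^r = (\<Sum>p\<in>G. (1/3::real)^r)" by simp
  also have "\<dots> \<le> (\<Sum>p\<in>G. (1/3::real)^(un n (fst p) (snd p)))"
    by (rule sum_mono) (auto simp: G_def intro: power_decreasing)
  also have "\<dots> \<le> (\<Sum>p\<in>bits n \<times> bits n. (1/3::real)^(un n (fst p) (snd p)))"
    by (rule sum_mono2) (auto simp: G_def)
  also have "\<dots> = 2^n" using gen_sum[of n] by (simp add: sum.cartesian_product split_def)
  finally have "real (card G) * (1/3)^r \<le> 2^n" .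
  then have "real (card G) * (1/3)^r * 3^r \<le> 2^n * 3^r" by (simp add: mult_right_mono)
  moreover have "(1/3::real)^r * 3^r = 1" by (simp add: power_mult_distrib[symmetric])
  ultimately show ?thesis by (simp add: mult.assoc)
qed

lemma cross_bound:
  assumes S: "S \<subseteq> bits n" and T: "T \<subseteq> bits n" and c: "cross n r S T"
  shows "real (card S * card T) \<le> 2^n * 3^r"
proof -
  obtain S' T' where v: "S' \<subseteq> bits n" "T' \<subseteq> bits n" "card S' = card S" "card T' = card T"
     "cross n r S' T'" "\<forall>i<n. \<forall>x\<in>S'. Dn i x \<in> S'" "\<forall>i<n. \<forall>y\<in>T'. Dn i y \<in> T'"
    using downset_exists[OF S T c] by (elim exE conjE) blast
  define G where "G = {p \<in> bits n \<times> bits n. un n (fst p) (snd p) \<le> r}"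
  have "S' \<times> T' \<subseteq> G" unfolding G_def un_def using union_small[OF v(1) v(2) v(5) v(6)] v(1,2) by auto
  then have "card (S' \<times> T') \<le> card G" by (intro card_mono) (simp_all add: G_def)
  then have "card S * card T \<le> card G" using v by (simp add: card_cartesian_product)
  then have "real (card S * card T) \<le> real (card G)" by (simp only: of_nat_le_iff)
  moreover have "real (card G) \<le> 2^n * 3^r" unfolding G_def by (rule pairs_bound)
  ultimately show ?thesis by (rule order_trans)
qed

definition Fh :: "nat \<Rightarrow> bool list \<Rightarrow> bool list \<Rightarrow> bool" where
  "Fh n x y = (2 * dst n x y < n)"

lemma rect_finite: "finite X \<Longrightarrow> finite Y \<Longrightarrow>
  finite {real (card (S \<times> T)) / real (card (X \<times> Y)) | S T. mono_rect X Y F S T}"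
proof -
  assume f: "finite X" "finite Y"
  have "{real (card (S \<times> T)) / real (card (X \<times> Y)) | S T. mono_rect X Y F S T}
      \<subseteq> (\<lambda>(S,T). real (card (S \<times> T)) / real (card (X \<times> Y))) ` (Pow X \<times> Pow Y)"
    by (auto simp: mono_rect_def)
  moreover have "finite ((\<lambda>(S,T). real (card (S \<times> T)) / real (card (X \<times> Y))) ` (Pow X \<times> Pow Y))"
    using f by simp
  ultimately show ?thesis by (rule finite_subset)
qed

lemma rect_ge: "finite X \<Longrightarrow> finite Y \<Longrightarrow> mono_rect X Y F S T \<Longrightarrow>
   real (card (S \<times> T)) / real (card (X \<times> Y)) \<le> rect X Y F"
  unfolding rect_def by (rule Max_ge[OF rect_finite]) auto

lemma rect_le:
  assumes "finite X" "finite Y"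
    and "\<And>S T. mono_rect X Y F S T \<Longrightarrow> real (card (S \<times> T)) / real (card (X \<times> Y)) \<le> v"
  shows "rect X Y F \<le> v"
proof -
  have "mono_rect X Y F {} {}" by (simp add: mono_rect_def)
  then have ne: "{real (card (S \<times> T)) / real (card (X \<times> Y)) | S T. mono_rect X Y F S T} \<noteq> {}" by blast
  show ?thesis unfolding rect_def using Max_le_iff[OF rect_finite[OF assms(1,2)] ne] assms(3) by blast
qed

lemma dst_not:
  assumes "length y = n"
  shows "dst n x (map Not y) = n - dst n x y"
proof -
  have "{i. i < n \<and> x!i \<noteq> map Not y!i} = {i. i < n} - {i. i < n \<and> x!i \<noteq> y!i}"
    using assms by auto
  then have "dst n x (map Not y) = card ({i. i < n} - {i. i < n \<and> x!i \<noteq> y!i})" by (simp add: dst_def)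
  also have "\<dots> = n - dst n x y" unfolding dst_def by (subst card_Diff_subset) auto
  finally show ?thesis .
qed

lemma mono_bound:
  assumes m: "mono_rect (bits n) (bits n) (Fh n) S T"
  shows "real (card S * card T) \<le> 2^n * 3^(n div 2)"
proof -
  from m have S: "S \<subseteq> bits n" and T: "T \<subseteq> bits n" and b: "\<exists>b. \<forall>x\<in>S. \<forall>y\<in>T. Fh n x y = b"
    by (auto simp: mono_rect_def)
  from b obtain b where b: "\<forall>x\<in>S. \<forall>y\<in>T. Fh n x y = b" by blast
  show ?thesis
  proof (cases b)
    case True
    have h: "\<And>d::nat. 2*d < n \<Longrightarrow> d \<le> n div 2" by presburger
    have "cross n (n div 2) S T" using b True h unfolding cross_def Fh_def by auto
    then show ?thesis by (rule cross_bound[OF S T])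
  next
    case False
    let ?T = "map Not ` T"
    have T': "?T \<subseteq> bits n" using T by (auto simp: bits_def)
    have inj: "inj_on (map Not) T" by (rule inj_on_inverseI[where g="map Not"]) (simp add: cmpr_def map_idI)
    have cT: "card ?T = card T" using card_image[OF inj] .
    have "cross n (n div 2) S ?T"
      unfolding cross_def
    proof (intro ballI)
      fix x z assume x: "x \<in> S" and z: "z \<in> ?T"
      then obtain y where y: "y \<in> T" "z = map Not y" by blast
      have ly: "length y = n" using y T by (auto simp: bits_def)
      have "\<not> 2 * dst n x y < n" using b False x y unfolding Fh_def by auto
      moreover have h: "\<And>d::nat. \<not> 2*d < n \<Longrightarrow> n - d \<le> n div 2" by presburger
      ultimately show "dst n x z \<le> n div 2" using dst_not[OF ly, of x] y by simp
    qed
    from cross_bound[OF S T' this] show ?thesis using cT by simp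
  qed
qed

lemma rect_Fh_le: "rect (bits n) (bits n) (Fh n) \<le> 3^(n div 2) / 2^n"
proof (rule rect_le)
  fix S T assume m: "mono_rect (bits n) (bits n) (Fh n) S T"
  have "real (card (S \<times> T)) = real (card S * card T)" by (simp add: card_cartesian_product)
  also have "\<dots> \<le> 2^n * 3^(n div 2)" by (rule mono_bound[OF m])
  finally have a: "real (card (S \<times> T)) \<le> 2^n * 3^(n div 2)" .
  have cc: "real (card (bits n \<times> bits n)) = 2^n * 2^n" by (simp add: card_cartesian_product card_bits)
  show "real (card (S \<times> T)) / real (card (bits n \<times> bits n)) \<le> 3^(n div 2) / 2^n"
    unfolding cc using a by (simp add: field_simps)
qed simp_all

lemma rect_Fh_pos: "0 < rect (bits n) (bits n) (Fh n)"
proof -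
  have r: "replicate n False \<in> bits n" by (simp add: bits_def)
  have "mono_rect (bits n) (bits n) (Fh n) {replicate n False} {replicate n False}"
    using r by (auto simp: mono_rect_def)
  from rect_ge[OF finite_bits finite_bits this]
  have "1 / (2^n * 2^n) \<le> rect (bits n) (bits n) (Fh n)"
    by (simp add: card_cartesian_product card_bits)
  moreover have "(0::real) < 1 / (2^n * 2^n)" by simp
  ultimately show ?thesis by linarith
qed

lemma nat_ineq: "2^n * 3^(10*(n div 2)) \<le> (2::nat)^(10*n)"
proof -
  have "(3::nat)^(10*(n div 2)) \<le> 3^(5*n)" by (rule power_increasing) auto
  also have "\<dots> = 243^n" by (simp add: power_mult)
  also have "\<dots> \<le> 512^n" by (rule power_mono) auto
  also have "\<dots> = 2^(9*n)" by (simp add: power_mult)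
  finally have "2^n * (3::nat)^(10*(n div 2)) \<le> 2^n * 2^(9*n)" by simp
  also have "\<dots> = 2^(10*n)" by (simp add: power_add[symmetric])
  finally show ?thesis .
qed

lemma rect_Fh_exp: "2 powr (1/10 * real n) \<le> 1 / rect (bits n) (bits n) (Fh n)"
proof -
  define \<rho> where "\<rho> = rect (bits n) (bits n) (Fh n)"
  define x where "x = (2::real) powr (1/10 * real n)"
  have rp: "0 < \<rho>" unfolding \<rho>_def by (rule rect_Fh_pos)
  have rl: "\<rho> \<le> 3^(n div 2) / 2^n" unfolding \<rho>_def by (rule rect_Fh_le)
  have xp: "0 < x" unfolding x_def by simp
  have x10: "x^10 = 2^n" unfolding x_def by (simp add: powr_power powr_realpow)
  have "(x * \<rho>)^10 = 2^n * \<rho>^10" by (simp add: power_mult_distrib x10)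
  also have "\<dots> \<le> 2^n * (3^(n div 2) / 2^n)^10"
    using rl rp by (intro mult_left_mono power_mono) auto
  also have "\<dots> = real (2^n * 3^(10*(n div 2))) / real (2^(10*n))"
    by (simp add: power_divide power_mult[symmetric] mult.commute)
  also have "\<dots> \<le> 1"
  proof -
    have a: "real (2^n * 3^(10*(n div 2))) \<le> real (2^(10*n))" using nat_ineq[of n] by (simp only: of_nat_le_iff)
    have b: "0 < real ((2::nat)^(10*n))" by simp
    show ?thesis using divide_le_eq_1_pos[OF b] a by blast
  qed
  finally have "(x * \<rho>)^10 \<le> 1" .
  then have "x * \<rho> \<le> 1" using power_le_one_iff[of "x * \<rho>" 10] xp rp by simp
  then show ?thesis unfolding x_def[symmetric] \<rho>_def[symmetric] using rp by (simp add: field_simps)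
qed

fun leafrects :: "('x,'y) proto \<Rightarrow> ('x set \<times> 'y set) list" where
  "leafrects (Leaf b) = (if b then [(UNIV,UNIV)] else [])"
| "leafrects (Alice f l r) = map (\<lambda>R. (fst R \<inter> {x. \<not> f x}, snd R)) (leafrects l) @ map (\<lambda>R. (fst R \<inter> {x. f x}, snd R)) (leafrects r)"
| "leafrects (Bob g l r) = map (\<lambda>R. (fst R, snd R \<inter> {y. \<not> g y})) (leafrects l) @ map (\<lambda>R. (fst R, snd R \<inter> {y. g y})) (leafrects r)"
| "leafrects (Oracle _ _ _ _ _ _ _) = []"

lemma leafrects_eval: "plain T \<Longrightarrow> eval T x y \<longleftrightarrow> (\<exists>R\<in>set (leafrects T). x \<in> fst R \<and> y \<in> snd R)"
proof (induction T)
  case (Alice f l r)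
  then show ?case by (cases "f x") (simp_all add: bex_Un)
next
  case (Bob g l r)
  then show ?case by (cases "g y") (simp_all add: bex_Un)
qed auto

lemma leafrects_len: "length (leafrects T) \<le> 2 ^ depth T"
proof (induction T)
  case (Alice f l r)
  have "length (leafrects (Alice f l r)) = length (leafrects l) + length (leafrects r)" by simp
  also have "\<dots> \<le> 2 ^ depth l + 2 ^ depth r" using Alice by simp
  also have "\<dots> \<le> 2 ^ max (depth l) (depth r) + 2 ^ max (depth l) (depth r)"
    by (intro add_mono power_increasing) auto
  finally show ?case by simp
next
  case (Bob g l r)
  have "length (leafrects (Bob g l r)) = length (leafrects l) + length (leafrects r)" by simp
  also have "\<dots> \<le> 2 ^ depth l + 2 ^ depth r" using Bob by simp
  also have "\<dots> \<le> 2 ^ max (depth l) (depth r) + 2 ^ max (depth l) (depth r)"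
    by (intro add_mono power_increasing) auto
  finally show ?case by simp
qed auto

lemma length_concat_le: "(\<And>x. x \<in> set xs \<Longrightarrow> length (f x) \<le> M) \<Longrightarrow> length (concat (map f xs)) \<le> length xs * M"
  by (induction xs) (auto simp: add_mono)

lemma cover:
  fixes A :: "'a set" and B :: "'b set"
  assumes "nd_protocol A B P m"
  shows "\<exists>Q. length Q \<le> 2^m \<and>
     (\<forall>u\<in>A. \<forall>v\<in>B. P u v \<longleftrightarrow> (\<exists>R\<in>set Q. u \<in> fst R \<and> v \<in> snd R))"
proof -
  obtain k and \<pi> :: "bool list \<Rightarrow> ('a, 'b) proto" where
    p1: "\<forall>a. length a = k \<longrightarrow> plain (\<pi> a) \<and> k + depth (\<pi> a) \<le> m" and
    p2: "\<forall>x\<in>A. \<forall>y\<in>B. P x y \<longleftrightarrow> (\<exists>a. length a = k \<and> eval (\<pi> a) x y)"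
    using assms unfolding nd_protocol_def by blast
  define as where "as = List.n_lists k [True, False]"
  have as_set: "set as = {a. length a = k}" unfolding as_def set_n_lists by auto
  have as_len: "length as = 2^k" unfolding as_def by (simp add: length_n_lists numeral_2_eq_2)
  define Q where "Q = concat (map (\<lambda>a. leafrects (\<pi> a)) as)"
  have "length Q \<le> length as * 2^(m-k)"
    unfolding Q_def
  proof (rule length_concat_le)
    fix a assume "a \<in> set as"
    then have "length a = k" using as_set by auto
    then have "depth (\<pi> a) \<le> m - k" using p1 by auto
    then have "(2::nat) ^ depth (\<pi> a) \<le> 2^(m-k)" by (rule power_increasing) simp
    then show "length (leafrects (\<pi> a)) \<le> 2^(m-k)" using leafrects_len order_trans by blast
  qed
  also have "\<dots> \<le> 2^m"
  proof -
    have km: "k \<le> m" using p1[rule_format, of "replicate k False"] by simp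
    have "length as * 2^(m-k) = 2^k * 2^(m-k)" by (simp add: as_len)
    also have "\<dots> = (2::nat)^(k + (m-k))" by (simp only: power_add)
    also have "k + (m - k) = m" using km by simp
    finally show ?thesis by simp
  qed
  finally have lenQ: "length Q \<le> 2^m" .
  have "\<forall>u\<in>A. \<forall>v\<in>B. P u v \<longleftrightarrow> (\<exists>R\<in>set Q. u \<in> fst R \<and> v \<in> snd R)"
  proof (intro ballI)
    fix u v assume u: "u \<in> A" and v: "v \<in> B"
    have "P u v \<longleftrightarrow> (\<exists>a\<in>set as. eval (\<pi> a) u v)" using p2 u v as_set by auto
    also have "\<dots> \<longleftrightarrow> (\<exists>a\<in>set as. \<exists>R\<in>set (leafrects (\<pi> a)). u \<in> fst R \<and> v \<in> snd R)"
    proof -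
      have eq: "eval (\<pi> a) u v \<longleftrightarrow> (\<exists>R\<in>set (leafrects (\<pi> a)). u \<in> fst R \<and> v \<in> snd R)"
        if "a \<in> set as" for a
      proof -
        have "plain (\<pi> a)" using p1 as_set that by auto
        then show ?thesis by (rule leafrects_eval)
      qed
      show ?thesis using eq by blast
    qed
    also have "\<dots> \<longleftrightarrow> (\<exists>R\<in>set Q. u \<in> fst R \<and> v \<in> snd R)" unfolding Q_def by auto
    finally show "P u v \<longleftrightarrow> (\<exists>R\<in>set Q. u \<in> fst R \<and> v \<in> snd R)" .
  qed
  then show ?thesis using lenQ by blast
qed

lemma depth0: "depth T = 0 \<Longrightarrow> \<exists>b. T = Leaf b"
  by (cases T) auto

lemma nd0:
  fixes A :: "'a set" and B :: "'b set"
  assumes "nd_protocol A B P 0"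
  shows "\<exists>b0. \<forall>u\<in>A. \<forall>v\<in>B. P u v = b0"
proof -
  obtain k and \<pi> :: "bool list \<Rightarrow> ('a, 'b) proto" where
    p1: "\<forall>a. length a = k \<longrightarrow> plain (\<pi> a) \<and> k + depth (\<pi> a) \<le> 0" and
    p2: "\<forall>x\<in>A. \<forall>y\<in>B. P x y \<longleftrightarrow> (\<exists>a. length a = k \<and> eval (\<pi> a) x y)"
    using assms unfolding nd_protocol_def by blast
  have k: "k = 0" using p1[rule_format, of "replicate k False"] by simp
  then have "depth (\<pi> []) = 0" using p1 by auto
  then obtain b0 where b0: "\<pi> [] = Leaf b0" using depth0 by blast
  have "\<forall>u\<in>A. \<forall>v\<in>B. P u v = b0" using p2 k b0 by auto
  then show ?thesis by blast
qed

lemma Inf_enat_in: "Inf (A :: enat set) \<noteq> \<infinity> \<Longrightarrow> Inf A \<in> A"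
proof -
  assume a: "Inf A \<noteq> \<infinity>"
  then have "A \<noteq> {}" by (auto simp: Inf_enat_def)
  then obtain z where "z \<in> A" by blast
  then have "(LEAST x. x \<in> A) \<in> A" by (rule LeastI)
  then show ?thesis unfolding Inf_enat_def using \<open>A \<noteq> {}\<close> by simp
qed

lemma Ncost_enat: "Ncost A B P = enat k \<Longrightarrow> nd_protocol A B P k"
proof -
  assume e: "Ncost A B P = enat k"
  have "Inf (enat ` {m. nd_protocol A B P m}) = enat k" using e unfolding Ncost_def by simp
  then have "enat k \<in> enat ` {m. nd_protocol A B P m}" using Inf_enat_in by (metis enat.simps(3))
  then show ?thesis by auto
qed

lemma shrink:
  fixes qs :: "('x set \<times> 'y set) list" and S :: "'x set" and U :: "'y set"
  assumes e0: "0 \<le> \<epsilon>" and e1: "\<epsilon> \<le> 1" and fS: "finite S" and fU: "finite U"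
  shows "(\<exists>S'\<subseteq>S. \<exists>U'\<subseteq>U. (\<exists>R\<in>set qs. S' \<subseteq> fst R \<and> U' \<subseteq> snd R) \<and>
           \<epsilon>^2 * (1-\<epsilon>)^length qs * (real (card S) * real (card U)) \<le> real (card S') * real (card U'))
       \<or> (\<exists>S'\<subseteq>S. \<exists>U'\<subseteq>U. (\<forall>R\<in>set qs. \<forall>x\<in>S'. \<forall>y\<in>U'. \<not> (x \<in> fst R \<and> y \<in> snd R)) \<and>
           (1-\<epsilon>)^length qs * (real (card S) * real (card U)) \<le> real (card S') * real (card U'))"
  using fS fU
proof (induction qs arbitrary: S U)
  case Nil
  then show ?case by auto
next
  case (Cons R qs)
  let ?L = "length qs"
  define s where "s = real (card S)"
  define u where "u = real (card U)"
  have s0: "0 \<le> s" "0 \<le> u" unfolding s_def u_def by auto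
  have pL: "0 \<le> (1-\<epsilon>)^?L" "(1-\<epsilon>)^?L \<le> 1" using e0 e1 by (auto intro: power_le_one)
  show ?case
  proof (cases "\<epsilon> * s \<le> real (card (S \<inter> fst R)) \<and> \<epsilon> * u \<le> real (card (U \<inter> snd R))")
    case True
    have "\<epsilon>^2 * (1-\<epsilon>)^length (R#qs) * (s * u) \<le> \<epsilon>^2 * (s * u)"
    proof -
      have "(1-\<epsilon>)^length (R#qs) \<le> 1" using e0 e1 by (intro power_le_one) auto
      then show ?thesis using s0 by (intro mult_right_mono) (auto simp: mult_left_le)
    qed
    also have "\<dots> = (\<epsilon> * s) * (\<epsilon> * u)" by (simp add: power2_eq_square)
    also have "\<dots> \<le> real (card (S \<inter> fst R)) * real (card (U \<inter> snd R))"
      using True s0 e0 by (intro mult_mono) auto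
    finally have "\<epsilon>^2 * (1-\<epsilon>)^length (R#qs) * (s * u) \<le> real (card (S \<inter> fst R)) * real (card (U \<inter> snd R))" .
    then show ?thesis unfolding s_def u_def
      by (intro disjI1 exI[of _ "S \<inter> fst R"] exI[of _ "U \<inter> snd R"]) auto
  next
    case False
    then consider (a) "real (card (S \<inter> fst R)) < \<epsilon> * s" | (b) "real (card (U \<inter> snd R)) < \<epsilon> * u" by linarith
    then show ?thesis
    proof cases
      case a
      define S1 where "S1 = S - fst R"
      have fS1: "finite S1" using Cons.prems S1_def by auto
      have cS1: "real (card S1) = s - real (card (S \<inter> fst R))"
      proof -
        have "S1 = S - (S \<inter> fst R)" unfolding S1_def by auto
        then have "card S1 = card S - card (S \<inter> fst R)" using Cons.prems by (simp add: card_Diff_subset)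
        moreover have "card (S \<inter> fst R) \<le> card S" using Cons.prems by (intro card_mono) auto
        ultimately show ?thesis unfolding s_def by simp
      qed
      have big: "(1-\<epsilon>) * s \<le> real (card S1)" using a cS1 by (simp add: algebra_simps)
      have key: "(1-\<epsilon>)^length (R#qs) * (s * u) \<le> (1-\<epsilon>)^?L * (real (card S1) * u)"
      proof -
        have "(1-\<epsilon>)^length (R#qs) * (s * u) = (1-\<epsilon>)^?L * (((1-\<epsilon>) * s) * u)" by (simp add: algebra_simps)
        also have "\<dots> \<le> (1-\<epsilon>)^?L * (real (card S1) * u)"
          using big pL s0 by (intro mult_left_mono mult_right_mono) auto
        finally show ?thesis .
      qed
      from Cons.IH[OF fS1 Cons.prems(2)] show ?thesis
      proof
        assume "\<exists>S'\<subseteq>S1. \<exists>U'\<subseteq>U. (\<exists>R\<in>set qs. S' \<subseteq> fst R \<and> U' \<subseteq> snd R) \<and>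
           \<epsilon>^2 * (1-\<epsilon>)^?L * (real (card S1) * real (card U)) \<le> real (card S') * real (card U')"
        then obtain S' U' where h: "S' \<subseteq> S1" "U' \<subseteq> U" "\<exists>R\<in>set qs. S' \<subseteq> fst R \<and> U' \<subseteq> snd R"
          "\<epsilon>^2 * (1-\<epsilon>)^?L * (real (card S1) * real (card U)) \<le> real (card S') * real (card U')" by blast
        have "\<epsilon>^2 * (1-\<epsilon>)^length (R#qs) * (s * u) \<le> \<epsilon>^2 * ((1-\<epsilon>)^?L * (real (card S1) * u))"
          using key by (simp add: mult.assoc mult_left_mono)
        also have "\<dots> \<le> real (card S') * real (card U')" using h(4) unfolding u_def by (simp add: mult.assoc)
        finally have bd: "\<epsilon>^2 * (1-\<epsilon>)^length (R#qs) * (real (card S) * real (card U)) \<le> real (card S') * real (card U')"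
          unfolding s_def u_def .
        have "S' \<subseteq> S" using h(1) unfolding S1_def by auto
        moreover have "\<exists>R'\<in>set (R#qs). S' \<subseteq> fst R' \<and> U' \<subseteq> snd R'" using h(3) by auto
        ultimately show ?thesis using h(2) bd by blast
      next
        assume "\<exists>S'\<subseteq>S1. \<exists>U'\<subseteq>U. (\<forall>R\<in>set qs. \<forall>x\<in>S'. \<forall>y\<in>U'. \<not> (x \<in> fst R \<and> y \<in> snd R)) \<and>
           (1-\<epsilon>)^?L * (real (card S1) * real (card U)) \<le> real (card S') * real (card U')"
        then obtain S' U' where h: "S' \<subseteq> S1" "U' \<subseteq> U" "\<forall>R\<in>set qs. \<forall>x\<in>S'. \<forall>y\<in>U'. \<not> (x \<in> fst R \<and> y \<in> snd R)"
          "(1-\<epsilon>)^?L * (real (card S1) * real (card U)) \<le> real (card S') * real (card U')" by blast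
        have "(1-\<epsilon>)^length (R#qs) * (s * u) \<le> real (card S') * real (card U')"
          using key h(4) unfolding u_def by linarith
        moreover have "\<forall>R'\<in>set (R#qs). \<forall>x\<in>S'. \<forall>y\<in>U'. \<not> (x \<in> fst R' \<and> y \<in> snd R')"
          using h(1,3) unfolding S1_def by auto
        moreover have "S' \<subseteq> S" using h(1) unfolding S1_def by auto
        ultimately show ?thesis using h(2) unfolding s_def u_def by blast
      qed
    next
      case b
      define U1 where "U1 = U - snd R"
      have fU1: "finite U1" using Cons.prems U1_def by auto
      have cU1: "real (card U1) = u - real (card (U \<inter> snd R))"
      proof -
        have "U1 = U - (U \<inter> snd R)" unfolding U1_def by auto
        then have "card U1 = card U - card (U \<inter> snd R)" using Cons.prems by (simp add: card_Diff_subset)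
        moreover have "card (U \<inter> snd R) \<le> card U" using Cons.prems by (intro card_mono) auto
        ultimately show ?thesis unfolding u_def by simp
      qed
      have big: "(1-\<epsilon>) * u \<le> real (card U1)" using b cU1 by (simp add: algebra_simps)
      have key: "(1-\<epsilon>)^length (R#qs) * (s * u) \<le> (1-\<epsilon>)^?L * (s * real (card U1))"
      proof -
        have "(1-\<epsilon>)^length (R#qs) * (s * u) = (1-\<epsilon>)^?L * (s * ((1-\<epsilon>) * u))" by (simp add: algebra_simps)
        also have "\<dots> \<le> (1-\<epsilon>)^?L * (s * real (card U1))"
          using big pL s0 by (intro mult_left_mono) auto
        finally show ?thesis .
      qed
      from Cons.IH[OF Cons.prems(1) fU1] show ?thesis
      proof
        assume "\<exists>S'\<subseteq>S. \<exists>U'\<subseteq>U1. (\<exists>R\<in>set qs. S' \<subseteq> fst R \<and> U' \<subseteq> snd R) \<and>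
           \<epsilon>^2 * (1-\<epsilon>)^?L * (real (card S) * real (card U1)) \<le> real (card S') * real (card U')"
        then obtain S' U' where h: "S' \<subseteq> S" "U' \<subseteq> U1" "\<exists>R\<in>set qs. S' \<subseteq> fst R \<and> U' \<subseteq> snd R"
          "\<epsilon>^2 * (1-\<epsilon>)^?L * (real (card S) * real (card U1)) \<le> real (card S') * real (card U')" by blast
        have "\<epsilon>^2 * (1-\<epsilon>)^length (R#qs) * (s * u) \<le> \<epsilon>^2 * ((1-\<epsilon>)^?L * (s * real (card U1)))"
          using key by (simp add: mult.assoc mult_left_mono)
        also have "\<dots> \<le> real (card S') * real (card U')" using h(4) unfolding s_def by (simp add: mult.assoc)
        finally have bd: "\<epsilon>^2 * (1-\<epsilon>)^length (R#qs) * (real (card S) * real (card U)) \<le> real (card S') * real (card U')"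
          unfolding s_def u_def .
        have "U' \<subseteq> U" using h(2) unfolding U1_def by auto
        moreover have "\<exists>R'\<in>set (R#qs). S' \<subseteq> fst R' \<and> U' \<subseteq> snd R'" using h(3) by auto
        ultimately show ?thesis using h(1) bd by blast
      next
        assume "\<exists>S'\<subseteq>S. \<exists>U'\<subseteq>U1. (\<forall>R\<in>set qs. \<forall>x\<in>S'. \<forall>y\<in>U'. \<not> (x \<in> fst R \<and> y \<in> snd R)) \<and>
           (1-\<epsilon>)^?L * (real (card S) * real (card U1)) \<le> real (card S') * real (card U')"
        then obtain S' U' where h: "S' \<subseteq> S" "U' \<subseteq> U1" "\<forall>R\<in>set qs. \<forall>x\<in>S'. \<forall>y\<in>U'. \<not> (x \<in> fst R \<and> y \<in> snd R)"
          "(1-\<epsilon>)^?L * (real (card S) * real (card U1)) \<le> real (card S') * real (card U')" by blast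
        have "(1-\<epsilon>)^length (R#qs) * (s * u) \<le> real (card S') * real (card U')"
          using key h(4) unfolding s_def by linarith
        moreover have "\<forall>R'\<in>set (R#qs). \<forall>x\<in>S'. \<forall>y\<in>U'. \<not> (x \<in> fst R' \<and> y \<in> snd R')"
          using h(2,3) unfolding U1_def by auto
        moreover have "U' \<subseteq> U" using h(2) unfolding U1_def by auto
        ultimately show ?thesis using h(1) unfolding s_def u_def by blast
      qed
    qed
  qed
qed

lemma arith_helper:
  fixes su p q \<alpha> :: real
  assumes a0: "0 < \<alpha>" and h1: "\<alpha> * su \<le> p" and h2: "p \<le> 2^m * q" and h3: "1 / 2^j \<le> \<alpha>"
    and h4: "j + m \<le> M" and q0: "0 \<le> q" and su0: "0 \<le> su"
  shows "su \<le> 2^M * q"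
proof -
  have "su = (1/2^j) * su * 2^j" by simp
  also have "\<dots> \<le> \<alpha> * su * 2^j" using h3 su0 by (intro mult_right_mono) auto
  also have "\<dots> \<le> p * 2^j" using h1 by (intro mult_right_mono) auto
  also have "\<dots> \<le> 2^m * q * 2^j" using h2 by (intro mult_right_mono) auto
  also have "\<dots> = 2^(j+m) * q" by (simp add: power_add)
  also have "\<dots> \<le> 2^M * q" using h4 q0 by (intro mult_right_mono power_increasing) auto
  finally show ?thesis .
qed

lemma enat_split: "N + m \<le> enat c \<Longrightarrow> \<exists>k j. N = enat k \<and> m = enat j \<and> k + j \<le> c"
  by (cases N; cases m) auto

lemma big_rect:
  fixes T :: "('x,'y) proto" and S :: "'x set" and U :: "'y set"
  assumes "wf_oracles X Y T" "npcost T \<le> enat c" "S \<subseteq> X" "U \<subseteq> Y" "finite S" "finite U"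
  shows "\<exists>S'\<subseteq>S. \<exists>U'\<subseteq>U. (\<exists>b. \<forall>x\<in>S'. \<forall>y\<in>U'. eval T x y = b) \<and>
           real (card S) * real (card U) \<le> 2^(5*c) * (real (card S') * real (card U'))"
  using assms
proof (induction T arbitrary: c S U)
  case (Leaf b)
  have "1 * (real (card S) * real (card U)) \<le> 2^(5*c) * (real (card S) * real (card U))"
    by (rule mult_right_mono) auto
  then have "real (card S) * real (card U) \<le> 2^(5*c) * (real (card S) * real (card U))" by simp
  moreover have "\<exists>b'. \<forall>x\<in>S. \<forall>y\<in>U. eval (Leaf b) x y = b'" by simp
  ultimately show ?case by blast
next
  case (Alice f l r)
  obtain k j where kj: "(1::enat) = enat k" "max (npcost l) (npcost r) = enat j" "k + j \<le> c"
    using enat_split[of 1 "max (npcost l) (npcost r)" c] Alice.prems(2) by auto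
  have k1: "k = 1" using kj(1) by (simp add: one_enat_def)
  have mj: "max (npcost l) (npcost r) \<le> enat (c - 1)" using kj k1 by simp
  have cl: "npcost l \<le> enat (c - 1)" "npcost r \<le> enat (c - 1)" using mj by (simp_all add: max.bounded_iff)
  have c1: "1 \<le> c" using kj k1 by simp
  define S1 where "S1 = {x\<in>S. f x}"
  define S0 where "S0 = {x\<in>S. \<not> f x}"
  have fin: "finite S1" "finite S0" using Alice.prems(5) S1_def S0_def by auto
  have cs: "card S = card S1 + card S0"
  proof -
    have "S = S1 \<union> S0" "S1 \<inter> S0 = {}" unfolding S1_def S0_def by auto
    then show ?thesis using fin card_Un_disjoint by metis
  qed
  have final: "real (card S) * real (card U) \<le> 2^(5*c) * q"
    if "real (card S) \<le> 2 * real s1" "real s1 * real (card U) \<le> 2^(5*(c-1)) * q" "0 \<le> q" for s1 q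
  proof -
    have a: "real (card S) * real (card U) \<le> (2 * real s1) * real (card U)" by (rule mult_right_mono[OF that(1)]) simp
    then have a2: "1/2 * (real (card S) * real (card U)) \<le> real s1 * real (card U)" by simp
    show ?thesis
      by (rule arith_helper[where \<alpha>="1/2" and j=1 and m="5*(c-1)" and p="real s1 * real (card U)", OF _ a2 that(2)])
         (use that c1 in auto)
  qed
  show ?case
  proof (cases "card S0 \<le> card S1")
    case True
    have sub: "S1 \<subseteq> X" using Alice.prems(3) unfolding S1_def by auto
    have ih: "\<exists>S'\<subseteq>S1. \<exists>U'\<subseteq>U. (\<exists>b. \<forall>x\<in>S'. \<forall>y\<in>U'. eval r x y = b) \<and> real (card S1) * real (card U) \<le> 2^(5*(c-1)) * (real (card S') * real (card U'))"
      by (rule Alice.IH(2)) (use Alice.prems fin cl sub in auto)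
    then obtain S' U' where h: "S' \<subseteq> S1" "U' \<subseteq> U" "\<exists>b. \<forall>x\<in>S'. \<forall>y\<in>U'. eval r x y = b"
      "real (card S1) * real (card U) \<le> 2^(5*(c-1)) * (real (card S') * real (card U'))" by blast
    obtain b0 where b0: "\<forall>x\<in>S'. \<forall>y\<in>U'. eval r x y = b0" using h(3) by blast
    have "\<forall>x\<in>S'. \<forall>y\<in>U'. eval (Alice f l r) x y = b0" using h(1) b0 unfolding S1_def by auto
    then have "\<exists>b. \<forall>x\<in>S'. \<forall>y\<in>U'. eval (Alice f l r) x y = b" by blast
    moreover have "real (card S) * real (card U) \<le> 2^(5*c) * (real (card S') * real (card U'))"
      by (rule final[OF _ h(4)]) (use cs True in auto)
    moreover have "S' \<subseteq> S" using h(1) S1_def by auto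
    ultimately show ?thesis using h(2) by blast
  next
    case False
    have sub: "S0 \<subseteq> X" using Alice.prems(3) unfolding S0_def by auto
    have ih: "\<exists>S'\<subseteq>S0. \<exists>U'\<subseteq>U. (\<exists>b. \<forall>x\<in>S'. \<forall>y\<in>U'. eval l x y = b) \<and> real (card S0) * real (card U) \<le> 2^(5*(c-1)) * (real (card S') * real (card U'))"
      by (rule Alice.IH(1)) (use Alice.prems fin cl sub in auto)
    then obtain S' U' where h: "S' \<subseteq> S0" "U' \<subseteq> U" "\<exists>b. \<forall>x\<in>S'. \<forall>y\<in>U'. eval l x y = b"
      "real (card S0) * real (card U) \<le> 2^(5*(c-1)) * (real (card S') * real (card U'))" by blast
    obtain b0 where b0: "\<forall>x\<in>S'. \<forall>y\<in>U'. eval l x y = b0" using h(3) by blast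
    have "\<forall>x\<in>S'. \<forall>y\<in>U'. eval (Alice f l r) x y = b0" using h(1) b0 unfolding S0_def by auto
    then have "\<exists>b. \<forall>x\<in>S'. \<forall>y\<in>U'. eval (Alice f l r) x y = b" by blast
    moreover have "real (card S) * real (card U) \<le> 2^(5*c) * (real (card S') * real (card U'))"
      by (rule final[OF _ h(4)]) (use cs False in auto)
    moreover have "S' \<subseteq> S" using h(1) S0_def by auto
    ultimately show ?thesis using h(2) by blast
  qed
next
  case (Bob g l r)
  obtain k j where kj: "(1::enat) = enat k" "max (npcost l) (npcost r) = enat j" "k + j \<le> c"
    using enat_split[of 1 "max (npcost l) (npcost r)" c] Bob.prems(2) by auto
  have k1: "k = 1" using kj(1) by (simp add: one_enat_def)
  have mj: "max (npcost l) (npcost r) \<le> enat (c - 1)" using kj k1 by simp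
  have cl: "npcost l \<le> enat (c - 1)" "npcost r \<le> enat (c - 1)" using mj by (simp_all add: max.bounded_iff)
  have c1: "1 \<le> c" using kj k1 by simp
  define U1 where "U1 = {y\<in>U. g y}"
  define U0 where "U0 = {y\<in>U. \<not> g y}"
  have fin: "finite U1" "finite U0" using Bob.prems(6) U1_def U0_def by auto
  have cs: "card U = card U1 + card U0"
  proof -
    have "U = U1 \<union> U0" "U1 \<inter> U0 = {}" unfolding U1_def U0_def by auto
    then show ?thesis using fin card_Un_disjoint by metis
  qed
  have final: "real (card S) * real (card U) \<le> 2^(5*c) * q"
    if "real (card U) \<le> 2 * real u1" "real (card S) * real u1 \<le> 2^(5*(c-1)) * q" "0 \<le> q" for u1 q
  proof -
    have a: "real (card S) * real (card U) \<le> real (card S) * (2 * real u1)" by (rule mult_left_mono[OF that(1)]) simp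
    then have a2: "1/2 * (real (card S) * real (card U)) \<le> real (card S) * real u1" by simp
    show ?thesis
      by (rule arith_helper[where \<alpha>="1/2" and j=1 and m="5*(c-1)" and p="real (card S) * real u1", OF _ a2 that(2)])
         (use that c1 in auto)
  qed
  show ?case
  proof (cases "card U0 \<le> card U1")
    case True
    have sub: "U1 \<subseteq> Y" using Bob.prems(4) unfolding U1_def by auto
    have ih: "\<exists>S'\<subseteq>S. \<exists>U'\<subseteq>U1. (\<exists>b. \<forall>x\<in>S'. \<forall>y\<in>U'. eval r x y = b) \<and> real (card S) * real (card U1) \<le> 2^(5*(c-1)) * (real (card S') * real (card U'))"
      by (rule Bob.IH(2)) (use Bob.prems fin cl sub in auto)
    then obtain S' U' where h: "S' \<subseteq> S" "U' \<subseteq> U1" "\<exists>b. \<forall>x\<in>S'. \<forall>y\<in>U'. eval r x y = b"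
      "real (card S) * real (card U1) \<le> 2^(5*(c-1)) * (real (card S') * real (card U'))" by blast
    obtain b0 where b0: "\<forall>x\<in>S'. \<forall>y\<in>U'. eval r x y = b0" using h(3) by blast
    have "\<forall>x\<in>S'. \<forall>y\<in>U'. eval (Bob g l r) x y = b0" using h(2) b0 unfolding U1_def by auto
    then have "\<exists>b. \<forall>x\<in>S'. \<forall>y\<in>U'. eval (Bob g l r) x y = b" by blast
    moreover have "real (card S) * real (card U) \<le> 2^(5*c) * (real (card S') * real (card U'))"
      by (rule final[OF _ h(4)]) (use cs True in auto)
    moreover have "U' \<subseteq> U" using h(2) U1_def by auto
    ultimately show ?thesis using h(1) by blast
  next
    case False
    have sub: "U0 \<subseteq> Y" using Bob.prems(4) unfolding U0_def by auto
    have ih: "\<exists>S'\<subseteq>S. \<exists>U'\<subseteq>U0. (\<exists>b. \<forall>x\<in>S'. \<forall>y\<in>U'. eval l x y = b) \<and> real (card S) * real (card U0) \<le> 2^(5*(c-1)) * (real (card S') * real (card U'))"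
      by (rule Bob.IH(1)) (use Bob.prems fin cl sub in auto)
    then obtain S' U' where h: "S' \<subseteq> S" "U' \<subseteq> U0" "\<exists>b. \<forall>x\<in>S'. \<forall>y\<in>U'. eval l x y = b"
      "real (card S) * real (card U0) \<le> 2^(5*(c-1)) * (real (card S') * real (card U'))" by blast
    obtain b0 where b0: "\<forall>x\<in>S'. \<forall>y\<in>U'. eval l x y = b0" using h(3) by blast
    have "\<forall>x\<in>S'. \<forall>y\<in>U'. eval (Bob g l r) x y = b0" using h(2) b0 unfolding U0_def by auto
    then have "\<exists>b. \<forall>x\<in>S'. \<forall>y\<in>U'. eval (Bob g l r) x y = b" by blast
    moreover have "real (card S) * real (card U) \<le> 2^(5*c) * (real (card S') * real (card U'))"
      by (rule final[OF _ h(4)]) (use cs False in auto)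
    moreover have "U' \<subseteq> U" using h(2) U0_def by auto
    ultimately show ?thesis using h(1) by blast
  qed
next
  case (Oracle A B P a b l r)
  have wf: "a ` X \<subseteq> A" "b ` Y \<subseteq> B" "wf_oracles X Y l" "wf_oracles X Y r" using Oracle.prems(1) by auto
  obtain k j where kj: "Ncost A B P = enat k" "max (npcost l) (npcost r) = enat j" "k + j \<le> c"
    using enat_split[of "Ncost A B P" "max (npcost l) (npcost r)" c] Oracle.prems(2) by auto
  have mj: "max (npcost l) (npcost r) \<le> enat (c - k)" using kj by simp
  have cl: "npcost l \<le> enat (c - k)" "npcost r \<le> enat (c - k)" using mj by (simp_all add: max.bounded_iff)
  have kc: "k \<le> c" using kj by simp
  have nd: "nd_protocol A B P k" by (rule Ncost_enat[OF kj(1)])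
  have inA: "\<And>x. x \<in> S \<Longrightarrow> a x \<in> A" using wf(1) Oracle.prems(3) by auto
  have inB: "\<And>y. y \<in> U \<Longrightarrow> b y \<in> B" using wf(2) Oracle.prems(4) by auto
  show ?case
  proof (cases "k = 0")
    case True
    have nd': "nd_protocol A B P 0" using nd True by simp
    obtain b0 where b0: "\<forall>u\<in>A. \<forall>v\<in>B. P u v = b0" using nd0[OF nd'] by blast
    define ch where "ch = (if b0 then r else l)"
    have ev: "\<And>x y. x \<in> S \<Longrightarrow> y \<in> U \<Longrightarrow> eval (Oracle A B P a b l r) x y = eval ch x y"
      using b0 inA inB unfolding ch_def by auto
    have wch: "wf_oracles X Y ch" "npcost ch \<le> enat c" using wf cl True unfolding ch_def by auto
    have ih: "\<exists>S'\<subseteq>S. \<exists>U'\<subseteq>U. (\<exists>b. \<forall>x\<in>S'. \<forall>y\<in>U'. eval ch x y = b) \<and>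
           real (card S) * real (card U) \<le> 2^(5*c) * (real (card S') * real (card U'))"
    proof (cases b0)
      case True
      then show ?thesis unfolding ch_def using Oracle.IH(2)[OF wf(4) cl(2)[unfolded \<open>k = 0\<close>]] Oracle.prems by simp
    next
      case False
      then show ?thesis unfolding ch_def using Oracle.IH(1)[OF wf(3) cl(1)[unfolded \<open>k = 0\<close>]] Oracle.prems by simp
    qed
    then obtain S' U' where h: "S' \<subseteq> S" "U' \<subseteq> U" "\<exists>b. \<forall>x\<in>S'. \<forall>y\<in>U'. eval ch x y = b"
      "real (card S) * real (card U) \<le> 2^(5*c) * (real (card S') * real (card U'))" by blast
    obtain bb where bb: "\<forall>x\<in>S'. \<forall>y\<in>U'. eval ch x y = bb" using h(3) by blast
    have "\<forall>x\<in>S'. \<forall>y\<in>U'. eval (Oracle A B P a b l r) x y = bb"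
    proof (intro ballI)
      fix x y assume xy: "x \<in> S'" "y \<in> U'"
      then have "x \<in> S" "y \<in> U" using h(1,2) by auto
      then have "eval (Oracle A B P a b l r) x y = eval ch x y" by (rule ev)
      also have "eval ch x y = bb" using bb xy by blast
      finally show "eval (Oracle A B P a b l r) x y = bb" .
    qed
    then show ?thesis using h(1,2,4) by blast
  next
    case False
    then have k1: "1 \<le> k" by simp
    obtain Q where Q: "length Q \<le> 2^k" "\<forall>u\<in>A. \<forall>v\<in>B. P u v \<longleftrightarrow> (\<exists>R\<in>set Q. u \<in> fst R \<and> v \<in> snd R)"
      using cover[OF nd] by blast
    define qs where "qs = map (\<lambda>R. ({x. a x \<in> fst R}, {y. b y \<in> snd R})) Q"
    define \<epsilon> :: real where "\<epsilon> = 1 / 2^(k+1)"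
    have p1: "(1::real) \<le> 2^(k+1)" by (rule one_le_power) simp
    have e0: "0 \<le> \<epsilon>" "\<epsilon> \<le> 1" unfolding \<epsilon>_def using p1 by auto
    have lq: "length qs \<le> 2^k" using Q(1) unfolding qs_def by simp
    have half: "1/2 \<le> (1 - \<epsilon>)^length qs"
    proof -
      have "1 + real (length qs) * (- \<epsilon>) \<le> (1 + (- \<epsilon>))^length qs"
        by (rule Bernoulli_inequality) (use e0 in auto)
      moreover have "real (length qs) * \<epsilon> \<le> 1/2"
      proof -
        have "real (length qs) \<le> 2^k" using lq by (metis of_nat_le_iff of_nat_numeral of_nat_power)
        then have "real (length qs) * \<epsilon> \<le> 2^k * \<epsilon>" using e0 by (intro mult_right_mono) auto
        also have "2^k * \<epsilon> = 1/2" unfolding \<epsilon>_def by simp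
        finally show ?thesis .
      qed
      ultimately show ?thesis by simp
    qed
    have epsq: "1 / 2^(2*k+3) \<le> \<epsilon>^2 * (1 - \<epsilon>)^length qs"
    proof -
      have "\<epsilon>^2 * (1/2) \<le> \<epsilon>^2 * (1 - \<epsilon>)^length qs" using half by (intro mult_left_mono) auto
      moreover have "\<epsilon>^2 * (1/2) = 1 / 2^(2*k+3)" unfolding \<epsilon>_def by (simp add: power_mult_distrib power_add power_mult[symmetric] field_simps)
      ultimately show ?thesis by simp
    qed
    have fS: "finite S" "finite U" using Oracle.prems by auto
    from shrink[OF e0 fS, of qs] show ?thesis
    proof
      assume "\<exists>S'\<subseteq>S. \<exists>U'\<subseteq>U. (\<exists>R\<in>set qs. S' \<subseteq> fst R \<and> U' \<subseteq> snd R) \<and>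
           \<epsilon>^2 * (1-\<epsilon>)^length qs * (real (card S) * real (card U)) \<le> real (card S') * real (card U')"
      then obtain S' U' R where h: "S' \<subseteq> S" "U' \<subseteq> U" "R \<in> set qs" "S' \<subseteq> fst R" "U' \<subseteq> snd R"
        "\<epsilon>^2 * (1-\<epsilon>)^length qs * (real (card S) * real (card U)) \<le> real (card S') * real (card U')" by blast
      obtain R0 where R0: "R0 \<in> set Q" "R = ({x. a x \<in> fst R0}, {y. b y \<in> snd R0})" using h(3) unfolding qs_def by auto
      have ev: "\<forall>x\<in>S'. \<forall>y\<in>U'. eval (Oracle A B P a b l r) x y = eval r x y"
      proof (intro ballI)
        fix x y assume x: "x \<in> S'" and y: "y \<in> U'"
        have "a x \<in> fst R0" "b y \<in> snd R0" using x y h(4,5) R0(2) by auto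
        moreover have "a x \<in> A" "b y \<in> B" using x y h(1,2) inA inB by auto
        ultimately have "P (a x) (b y)" using Q(2) R0(1) by blast
        then show "eval (Oracle A B P a b l r) x y = eval r x y" by simp
      qed
      have sub: "S' \<subseteq> X" "U' \<subseteq> Y" using h(1,2) Oracle.prems(3,4) by auto
      have fin': "finite S'" "finite U'" using h(1,2) fS finite_subset by auto
      have "\<exists>S''\<subseteq>S'. \<exists>U''\<subseteq>U'. (\<exists>b. \<forall>x\<in>S''. \<forall>y\<in>U''. eval r x y = b) \<and>
           real (card S') * real (card U') \<le> 2^(5*(c-k)) * (real (card S'') * real (card U''))"
        by (rule Oracle.IH(2)[OF wf(4) cl(2) sub fin'])
      then obtain S'' U'' where h2: "S'' \<subseteq> S'" "U'' \<subseteq> U'" "\<exists>b. \<forall>x\<in>S''. \<forall>y\<in>U''. eval r x y = b"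
           "real (card S') * real (card U') \<le> 2^(5*(c-k)) * (real (card S'') * real (card U''))" by blast
      obtain bb where bb: "\<forall>x\<in>S''. \<forall>y\<in>U''. eval r x y = bb" using h2(3) by blast
      have m: "\<forall>x\<in>S''. \<forall>y\<in>U''. eval (Oracle A B P a b l r) x y = bb"
      proof (intro ballI)
        fix x y assume xy: "x \<in> S''" "y \<in> U''"
        then have xy': "x \<in> S'" "y \<in> U'" using h2(1,2) by auto
        have "eval (Oracle A B P a b l r) x y = eval r x y" using ev xy' by blast
        also have "eval r x y = bb" using bb xy by blast
        finally show "eval (Oracle A B P a b l r) x y = bb" .
      qed
      have bound: "real (card S) * real (card U) \<le> 2^(5*c) * (real (card S'') * real (card U''))"
      proof (rule arith_helper[OF _ h(6) h2(4) epsq])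
        have "(0::real) < 1 / 2^(2*k+3)" by simp
        then show "0 < \<epsilon>^2 * (1-\<epsilon>)^length qs" using epsq by linarith
        show "2 * k + 3 + 5 * (c - k) \<le> 5 * c" using k1 kc by simp
      qed auto
      have ss: "S'' \<subseteq> S" "U'' \<subseteq> U" using h2(1,2) h(1,2) by auto
      have mm: "\<exists>bx. \<forall>x\<in>S''. \<forall>y\<in>U''. eval (Oracle A B P a b l r) x y = bx" using m by blast
      show ?thesis
        apply (rule exI[of _ S''], rule conjI, fact ss(1))
        apply (rule exI[of _ U''], rule conjI, fact ss(2))
        by (rule conjI, fact mm, fact bound)
    next
      assume "\<exists>S'\<subseteq>S. \<exists>U'\<subseteq>U. (\<forall>R\<in>set qs. \<forall>x\<in>S'. \<forall>y\<in>U'. \<not> (x \<in> fst R \<and> y \<in> snd R)) \<and>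
           (1-\<epsilon>)^length qs * (real (card S) * real (card U)) \<le> real (card S') * real (card U')"
      then obtain S' U' where h: "S' \<subseteq> S" "U' \<subseteq> U" "\<forall>R\<in>set qs. \<forall>x\<in>S'. \<forall>y\<in>U'. \<not> (x \<in> fst R \<and> y \<in> snd R)"
        "(1-\<epsilon>)^length qs * (real (card S) * real (card U)) \<le> real (card S') * real (card U')" by blast
      have ev: "\<forall>x\<in>S'. \<forall>y\<in>U'. eval (Oracle A B P a b l r) x y = eval l x y"
      proof (intro ballI)
        fix x y assume x: "x \<in> S'" and y: "y \<in> U'"
        have "a x \<in> A" "b y \<in> B" using x y h(1,2) inA inB by auto
        moreover have "\<not> (\<exists>R\<in>set Q. a x \<in> fst R \<and> b y \<in> snd R)"
        proof
          assume "\<exists>R\<in>set Q. a x \<in> fst R \<and> b y \<in> snd R"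
          then obtain R0 where "R0 \<in> set Q" "a x \<in> fst R0" "b y \<in> snd R0" by blast
          then have "({x. a x \<in> fst R0}, {y. b y \<in> snd R0}) \<in> set qs" "x \<in> {x. a x \<in> fst R0}" "y \<in> {y. b y \<in> snd R0}"
            unfolding qs_def by auto
          then show False using h(3) x y by fastforce
        qed
        ultimately have "\<not> P (a x) (b y)" using Q(2) by blast
        then show "eval (Oracle A B P a b l r) x y = eval l x y" by simp
      qed
      have sub: "S' \<subseteq> X" "U' \<subseteq> Y" using h(1,2) Oracle.prems(3,4) by auto
      have fin': "finite S'" "finite U'" using h(1,2) fS finite_subset by auto
      have "\<exists>S''\<subseteq>S'. \<exists>U''\<subseteq>U'. (\<exists>b. \<forall>x\<in>S''. \<forall>y\<in>U''. eval l x y = b) \<and>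
           real (card S') * real (card U') \<le> 2^(5*(c-k)) * (real (card S'') * real (card U''))"
        by (rule Oracle.IH(1)[OF wf(3) cl(1) sub fin'])
      then obtain S'' U'' where h2: "S'' \<subseteq> S'" "U'' \<subseteq> U'" "\<exists>b. \<forall>x\<in>S''. \<forall>y\<in>U''. eval l x y = b"
           "real (card S') * real (card U') \<le> 2^(5*(c-k)) * (real (card S'') * real (card U''))" by blast
      obtain bb where bb: "\<forall>x\<in>S''. \<forall>y\<in>U''. eval l x y = bb" using h2(3) by blast
      have m: "\<forall>x\<in>S''. \<forall>y\<in>U''. eval (Oracle A B P a b l r) x y = bb"
      proof (intro ballI)
        fix x y assume xy: "x \<in> S''" "y \<in> U''"
        then have xy': "x \<in> S'" "y \<in> U'" using h2(1,2) by auto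
        have "eval (Oracle A B P a b l r) x y = eval l x y" using ev xy' by blast
        also have "eval l x y = bb" using bb xy by blast
        finally show "eval (Oracle A B P a b l r) x y = bb" .
      qed
      have bound: "real (card S) * real (card U) \<le> 2^(5*c) * (real (card S'') * real (card U''))"
      proof (rule arith_helper[OF _ h(4) h2(4), where j=1])
        show "0 < (1-\<epsilon>)^length qs" using half by linarith
        show "1 / 2^1 \<le> (1-\<epsilon>)^length qs" using half by simp
        show "1 + 5 * (c - k) \<le> 5 * c" using k1 kc by simp
      qed auto
      have ss: "S'' \<subseteq> S" "U'' \<subseteq> U" using h2(1,2) h(1,2) by auto
      have mm: "\<exists>bx. \<forall>x\<in>S''. \<forall>y\<in>U''. eval (Oracle A B P a b l r) x y = bx" using m by blast
      show ?thesis
        apply (rule exI[of _ S''], rule conjI, fact ss(1))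
        apply (rule exI[of _ U''], rule conjI, fact ss(2))
        by (rule conjI, fact mm, fact bound)
    qed
  qed
qed

lemma DNP_rect:
  fixes X :: "'x set" and Y :: "'y set"
  assumes d: "DNP X Y F \<le> enat m" and fX: "finite X" and fY: "finite Y"
  shows "real (card X) * real (card Y) \<le> 2^(5*m) * (rect X Y F * real (card (X \<times> Y)))"
proof -
  define Ts where "Ts = {T. wf_oracles X Y T \<and> (\<forall>x\<in>X. \<forall>y\<in>Y. eval T x y = F x y)}"
  have "DNP X Y F = Inf (npcost ` Ts)" unfolding DNP_def Ts_def by simp
  moreover have "DNP X Y F \<noteq> \<infinity>" using d by (cases "DNP X Y F") auto
  ultimately have "Inf (npcost ` Ts) \<in> npcost ` Ts" using Inf_enat_in by metis
  then obtain T where T: "T \<in> Ts" "npcost T = DNP X Y F" using \<open>DNP X Y F = Inf (npcost ` Ts)\<close> by auto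
  have wf: "wf_oracles X Y T" and cor: "\<forall>x\<in>X. \<forall>y\<in>Y. eval T x y = F x y" using T(1) Ts_def by auto
  have np: "npcost T \<le> enat m" using T(2) d by simp
  obtain S' U' where h: "S' \<subseteq> X" "U' \<subseteq> Y" "\<exists>b. \<forall>x\<in>S'. \<forall>y\<in>U'. eval T x y = b"
    "real (card X) * real (card Y) \<le> 2^(5*m) * (real (card S') * real (card U'))"
    using big_rect[OF wf np subset_refl subset_refl fX fY] by blast
  obtain b0 where b0: "\<forall>x\<in>S'. \<forall>y\<in>U'. eval T x y = b0" using h(3) by blast
  have "\<forall>x\<in>S'. \<forall>y\<in>U'. F x y = b0"
  proof (intro ballI)
    fix x y assume xy: "x \<in> S'" "y \<in> U'"
    then have "x \<in> X" "y \<in> Y" using h(1,2) by auto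
    then have "F x y = eval T x y" using cor by simp
    also have "\<dots> = b0" using b0 xy by blast
    finally show "F x y = b0" .
  qed
  then have mr: "mono_rect X Y F S' U'" unfolding mono_rect_def using h(1,2) by blast
  have r: "real (card (S' \<times> U')) / real (card (X \<times> Y)) \<le> rect X Y F" by (rule rect_ge[OF fX fY mr])
  have "real (card S') * real (card U') \<le> rect X Y F * real (card (X \<times> Y))"
  proof (cases "card (X \<times> Y) = 0")
    case True
    then have "X = {} \<or> Y = {}" using fX fY by (simp add: card_cartesian_product)
    then have "card S' = 0 \<or> card U' = 0" using h(1,2) by auto
    then show ?thesis using True by auto
  next
    case False
    then show ?thesis using r by (simp add: card_cartesian_product field_simps)
  qed
  then have "2^(5*m) * (real (card S') * real (card U')) \<le> 2^(5*m) * (rect X Y F * real (card (X \<times> Y)))"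
    by (rule mult_left_mono) simp
  then show ?thesis using h(4) by (rule order_trans[rotated])
qed

lemma DNP_Fh: "ereal (1/50 * real n) \<le> ereal_of_enat (DNP (bits n) (bits n) (Fh n))"
proof (rule ccontr)
  assume "\<not> ?thesis"
  then have lt: "ereal_of_enat (DNP (bits n) (bits n) (Fh n)) < ereal (1/50 * real n)" by simp
  then obtain m where m: "DNP (bits n) (bits n) (Fh n) = enat m"
    by (cases "DNP (bits n) (bits n) (Fh n)") auto
  have mn: "real m < 1/50 * real n" using lt m by simp
  have b: "real (card (bits n)) * real (card (bits n)) \<le> 2^(5*m) * (rect (bits n) (bits n) (Fh n) * real (card (bits n \<times> bits n)))"
    by (rule DNP_rect) (use m in auto)
  define K where "K = real (card (bits n \<times> bits n))"
  define \<rho> where "\<rho> = rect (bits n) (bits n) (Fh n)"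
  have eq: "real (card (bits n)) * real (card (bits n)) = K"
    unfolding K_def by (simp add: card_cartesian_product)
  have pos: "0 < K" unfolding K_def by (simp add: card_cartesian_product card_bits)
  have b': "1 * K \<le> (2^(5*m) * \<rho>) * K" using b unfolding eq K_def[symmetric] \<rho>_def[symmetric] by (simp only: mult_1 mult.assoc)
  then have "1 \<le> 2^(5*m) * rect (bits n) (bits n) (Fh n)" using pos unfolding \<rho>_def by (simp only: mult_le_cancel_right_pos)
  then have "1 / rect (bits n) (bits n) (Fh n) \<le> 2^(5*m)" using rect_Fh_pos[of n] by (simp add: field_simps)
  with rect_Fh_exp[of n] have "2 powr (1/10 * real n) \<le> 2^(5*m)" by (rule order_trans)
  also have "(2::real)^(5*m) = 2 powr (real (5*m))" by (rule powr_realpow[symmetric]) simp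
  finally have "1/10 * real n \<le> real (5 * m)" by (simp only: powr_le_cancel_iff one_less_numeral_iff semiring_norm(76))
  then show False using mn by simp
qed

definition pr1 :: "nat \<Rightarrow> (bool list, bool list) proto" where
  "pr1 i = Alice (\<lambda>x. x!i) (Bob (\<lambda>y. y!i) (Leaf True) (Leaf False)) (Bob (\<lambda>y. y!i) (Leaf False) (Leaf True))"

lemma pr1_eval: "eval (pr1 i) x y = (x!i = y!i)"
  unfolding pr1_def by auto

lemma pr1_plain: "plain (pr1 i)" "depth (pr1 i) = 2"
  unfolding pr1_def by (auto simp: numeral_2_eq_2)

definition tau :: "nat \<Rightarrow> nat \<Rightarrow> (bool list, bool list) proto" where
  "tau n j = (if j < 2*n then pr1 (j mod n) else Leaf False)"

definition mu :: "nat \<Rightarrow> (bool list, bool list) proto pmf" where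
  "mu n = map_pmf (tau n) (pmf_of_set {..<2*n+1})"

lemma card_mod2: fixes n :: nat shows "card {j. j < 2*n \<and> P (j mod n)} = 2 * card {i. i < n \<and> P i}"
proof -
  have e: "{j. j < 2*n \<and> P (j mod n)} = {i. i < n \<and> P i} \<union> (\<lambda>i. i + n) ` {i. i < n \<and> P i}"
  proof (rule set_eqI)
    fix j
    show "j \<in> {j. j < 2*n \<and> P (j mod n)} \<longleftrightarrow> j \<in> {i. i < n \<and> P i} \<union> (\<lambda>i. i + n) ` {i. i < n \<and> P i}"
    proof (cases "j < n")
      case True
      then show ?thesis by auto
    next
      case False
      then have "j \<in> (\<lambda>i. i + n) ` {i. i < n \<and> P i} \<longleftrightarrow> j - n < n \<and> P (j - n)"
        by (auto simp: image_iff)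
      moreover have "j < 2 * n \<Longrightarrow> j mod n = j - n" using False by (simp add: le_mod_geq)
      ultimately show ?thesis using False by auto
    qed
  qed
  have "card ({i. i < n \<and> P i} \<union> (\<lambda>i. i + n) ` {i. i < n \<and> P i}) =
        card {i. i < n \<and> P i} + card ((\<lambda>i. i + n) ` {i. i < n \<and> P i})"
    by (rule card_Un_disjoint) auto
  also have "card ((\<lambda>i. i + n) ` {i. i < n \<and> P i}) = card {i. i < n \<and> P i}"
    by (rule card_image) (auto simp: inj_on_def)
  finally show ?thesis unfolding e by simp
qed

lemma mu_set: "set_pmf (mu n) = tau n ` {..<2*n+1}"
proof -
  have "{..<2*n+1} \<noteq> {}" by auto
  then show ?thesis unfolding mu_def by (simp add: set_pmf_of_set del: lessThan_empty_iff)
qed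

lemma mu_err:
  assumes "x \<in> bits n" "y \<in> bits n" "1 \<le> n"
  shows "measure_pmf.prob (mu n) {T. eval T x y \<noteq> Fh n x y} \<le> real n / real (2*n+1)"
proof -
  define d where "d = dst n x y"
  define Bd where "Bd = {j. j < 2*n+1 \<and> eval (tau n j) x y \<noteq> Fh n x y}"
  have "measure_pmf.prob (mu n) {T. eval T x y \<noteq> Fh n x y} = real (card Bd) / real (2*n+1)"
    unfolding mu_def measure_map_pmf by (subst measure_pmf_of_set) (auto simp: Bd_def Int_def)
  moreover have "card Bd \<le> n"
  proof -
    have Bd_eq: "Bd = {j. j < 2*n \<and> ((x!(j mod n) = y!(j mod n)) \<noteq> Fh n x y)} \<union> {j. j = 2*n \<and> Fh n x y}"
      unfolding Bd_def tau_def by (auto simp: pr1_eval)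
    have cB: "card Bd = card {j. j < 2*n \<and> ((x!(j mod n) = y!(j mod n)) \<noteq> Fh n x y)} + card {j. j = 2*n \<and> Fh n x y}"
      unfolding Bd_eq by (rule card_Un_disjoint) auto
    show ?thesis
    proof (cases "Fh n x y")
      case True
      have "{i. i < n \<and> ((x!i = y!i) \<noteq> True)} = {i. i < n \<and> x!i \<noteq> y!i}" by auto
      then have "card {j. j < 2*n \<and> ((x!(j mod n) = y!(j mod n)) \<noteq> Fh n x y)} = 2 * d"
        using card_mod2[of n "\<lambda>i. (x!i = y!i) \<noteq> True"] True unfolding d_def dst_def by simp
      moreover have "card {j. j = 2*n \<and> Fh n x y} = 1" using True by simp
      moreover have "2 * d < n" using True unfolding Fh_def d_def .
      ultimately show ?thesis using cB by simp
    next
      case False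
      have c1: "card {j. j < 2*n \<and> ((x!(j mod n) = y!(j mod n)) \<noteq> Fh n x y)} = 2 * card {i. i < n \<and> x!i = y!i}"
        using card_mod2[of n "\<lambda>i. x!i = y!i"] False by simp
      have e2: "{i. i < n \<and> x!i = y!i} = {i. i < n} - {i. i < n \<and> x!i \<noteq> y!i}" by auto
      have "card ({i. i < n} - {i. i < n \<and> x!i \<noteq> y!i}) = n - d" unfolding d_def dst_def
        by (subst card_Diff_subset) auto
      then have "card {i. i < n \<and> x!i = y!i} = n - d" unfolding e2 .
      moreover have "\<not> 2 * d < n" using False unfolding Fh_def d_def .
      ultimately show ?thesis using cB c1 False by simp
    qed
  qed
  ultimately show ?thesis by (simp add: divide_right_mono)
qed

lemma mu_rand: "1 \<le> n \<Longrightarrow> rand_protocol (bits n) (bits n) (Fh n) (mu n) 2 (real n / real (2*n+1))"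
  unfolding rand_protocol_def
proof (intro conjI ballI)
  fix T assume "T \<in> set_pmf (mu n)"
  then obtain j where "T = tau n j" unfolding mu_set by auto
  then show "plain T" "depth T \<le> 2" unfolding tau_def by (auto simp: pr1_plain)
next
  fix x y assume "1 \<le> n" "x \<in> bits n" "y \<in> bits n"
  then show "measure_pmf.prob (mu n) {T. eval T x y \<noteq> Fh n x y} \<le> real n / real (2*n+1)"
    using mu_err by blast
qed

lemma PP_bdd: "bdd_below {real c + log 2 (1 / (1/2 - \<epsilon>)) | c \<epsilon>.
       \<epsilon> < 1/2 \<and> (\<exists>\<mu>. rand_protocol (bits n) (bits n) F \<mu> c \<epsilon>)}"
proof (rule bdd_belowI[where m=0])
  fix z assume "z \<in> {real c + log 2 (1 / (1/2 - \<epsilon>)) | c \<epsilon>.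
       \<epsilon> < 1/2 \<and> (\<exists>\<mu>. rand_protocol (bits n) (bits n) F \<mu> c \<epsilon>)}"
  then obtain c \<epsilon> \<mu> where z: "z = real c + log 2 (1 / (1/2 - \<epsilon>))" "\<epsilon> < 1/2"
    "rand_protocol (bits n) (bits n) F \<mu> c \<epsilon>" by blast
  have r: "replicate n False \<in> bits n" by (simp add: bits_def)
  have "measure_pmf.prob \<mu> {T. eval T (replicate n False) (replicate n False) \<noteq> F (replicate n False) (replicate n False)} \<le> \<epsilon>"
    using z(3) r unfolding rand_protocol_def by blast
  then have e0: "0 \<le> \<epsilon>" using measure_nonneg order_trans by blast
  have "1 \<le> 1 / (1/2 - \<epsilon>)" using e0 z(2) by (simp add: field_simps)
  then have "0 \<le> log 2 (1 / (1/2 - \<epsilon>))" using z(2) by (subst zero_le_log_cancel_iff) auto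
  then show "0 \<le> z" using z(1) by simp
qed

lemma PP_Fh: "1 \<le> n \<Longrightarrow> PPcost (bits n) (bits n) (Fh n) \<le> 2 + log 2 (4 * real n + 2)"
proof -
  assume n: "1 \<le> n"
  define \<epsilon> where "\<epsilon> = real n / real (2*n+1)"
  have e: "\<epsilon> < 1/2" unfolding \<epsilon>_def by (simp add: field_simps)
  have inv: "1 / (1/2 - \<epsilon>) = 4 * real n + 2" unfolding \<epsilon>_def by (simp add: field_simps)
  have mem: "real 2 + log 2 (1 / (1/2 - \<epsilon>)) \<in> {real c + log 2 (1 / (1/2 - \<epsilon>)) | c \<epsilon>.
       \<epsilon> < 1/2 \<and> (\<exists>\<mu>. rand_protocol (bits n) (bits n) (Fh n) \<mu> c \<epsilon>)}"
    using e mu_rand[OF n] unfolding \<epsilon>_def by blast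
  have "PPcost (bits n) (bits n) (Fh n) \<le> real 2 + log 2 (1 / (1/2 - \<epsilon>))"
    unfolding PPcost_def by (rule cInf_lower[OF mem PP_bdd])
  then show ?thesis using inv by simp
qed

lemma PP_Fh_log: "2 \<le> n \<Longrightarrow> PPcost (bits n) (bits n) (Fh n) \<le> 6 * log 2 (real n)"
proof -
  assume n: "2 \<le> n"
  have "log 2 (4 * real n + 2) \<le> log 2 (8 * real n)" using n by simp
  also have "\<dots> = log 2 8 + log 2 (real n)" using n by (simp add: log_mult)
  also have "log 2 (8::real) = 3"
  proof -
    have "log 2 ((2::real)^3) = real 3" by (rule log_pow_cancel) auto
    then show ?thesis by simp
  qed
  finally have a: "log 2 (4 * real n + 2) \<le> 3 + log 2 (real n)" .
  have "1 \<le> log 2 (real n)" using n by simp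
  then show ?thesis using PP_Fh[of n] n a by linarith
qed

lemma polylog_small:
  fixes C :: real and k :: nat
  shows "\<exists>n\<ge>2. C * (log 2 (real n))^k < 1/50 * real n"
proof -
  define s :: real where "s = 1 / real (k+1)"
  have s0: "0 < s" unfolding s_def by simp
  define L where "L = (\<lambda>n::nat. ln (real n) / real n powr s)"
  have "L \<longlonglongrightarrow> 0" unfolding L_def by (rule lim_ln_over_power[OF s0])
  then have t: "(\<lambda>n. L n ^ (k+1)) \<longlonglongrightarrow> 0" using tendsto_power[of L 0 sequentially "k+1"] by simp
  define \<delta> where "\<delta> = (ln 2)^k / (50 * (\<bar>C\<bar> + 1))"
  have d0: "0 < \<delta>" unfolding \<delta>_def by simp
  have "eventually (\<lambda>n. L n ^ (k+1) < \<delta>) sequentially" by (rule order_tendstoD(2)[OF t d0])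
  then obtain N where N: "\<And>n. n \<ge> N \<Longrightarrow> L n ^ (k+1) < \<delta>" unfolding eventually_sequentially by blast
  define n where "n = max N 3"
  have n3: "3 \<le> n" and nN: "N \<le> n" unfolding n_def by auto
  have rn: "3 \<le> real n" using n3 by simp
  have ln1: "1 \<le> ln (real n)"
  proof -
    have "exp 1 \<le> real n" using exp_le rn by linarith
    then have "ln (exp 1) \<le> ln (real n)" using n3 by (subst ln_le_cancel_iff) auto
    then show ?thesis by simp
  qed
  have pw: "(real n powr s)^(k+1) = real n"
  proof -
    have "(real n powr s)^(k+1) = real n powr (real (k+1) * s)" using rn by (subst powr_power) auto
    also have "real (k+1) * s = 1" unfolding s_def by simp
    finally show ?thesis using rn by simp
  qed
  have Ln: "L n ^ (k+1) * real n = (ln (real n))^(k+1)"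
    unfolding L_def using pw rn by (simp add: power_divide)
  have "(ln (real n))^k \<le> (ln (real n))^(k+1)" using ln1 by (intro power_increasing) auto
  also have "\<dots> = L n ^ (k+1) * real n" using Ln by simp
  also have "\<dots> \<le> \<delta> * real n" using N[OF nN] rn by (intro mult_right_mono) auto
  finally have lnk: "(ln (real n))^k \<le> \<delta> * real n" .
  have l2: "0 < ln (2::real)" by simp
  have lg: "(log 2 (real n))^k = (ln (real n))^k / (ln 2)^k" by (simp add: log_def power_divide)
  have "C * (log 2 (real n))^k \<le> \<bar>C\<bar> * (log 2 (real n))^k"
    using ln1 by (intro mult_right_mono) (auto simp: log_def)
  also have "\<bar>C\<bar> * (log 2 (real n))^k \<le> \<bar>C\<bar> * (\<delta> * real n / (ln 2)^k)"
    unfolding lg using lnk l2 by (intro mult_left_mono divide_right_mono) auto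
  also have "\<delta> * real n / (ln 2)^k = real n / (50 * (\<bar>C\<bar> + 1))"
  proof -
    have a0: "(ln 2)^k \<noteq> (0::real)" using l2 by simp
    have b0: "50 * (\<bar>C\<bar> + 1) \<noteq> (0::real)" by (metis abs_ge_zero add_nonneg_pos less_numeral_extra(1) mult_pos_pos zero_less_numeral less_irrefl)
    show ?thesis unfolding \<delta>_def using a0 b0 by (simp add: divide_simps)
  qed
  also have "\<bar>C\<bar> * (real n / (50 * (\<bar>C\<bar> + 1))) < 1/50 * real n"
  proof -
    have "\<bar>C\<bar> * (real n / (50 * (\<bar>C\<bar> + 1))) = (\<bar>C\<bar> / (\<bar>C\<bar> + 1)) * (1/50 * real n)"
      by (simp add: field_simps)
    also have "\<dots> < 1 * (1/50 * real n)" using rn by (intro mult_strict_right_mono) auto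
    finally show ?thesis by simp
  qed
  finally have fin0: "C * (log 2 (real n))^k < 1/50 * real n" .
  have fin: "C * (log 2 (real n))^k < 1/50 * real n" using fin0 lg by simp
  show ?thesis using n3 fin by (intro exI[of _ n]) auto
qed

lemma nbit_bits: "nbit_family bits bits"
  unfolding nbit_family_def
proof (intro allI conjI)
  fix n
  show "finite (bits n)" by simp
  show "finite (bits n)" by simp
  show "bits n \<noteq> {}" using card_bits[of n] by (metis card.empty power_not_zero zero_neq_numeral)
  show "bits n \<noteq> {}" using card_bits[of n] by (metis card.empty power_not_zero zero_neq_numeral)
  have "log 2 (real (max (card (bits n)) (card (bits n)))) = log 2 ((2::real)^n)" by (simp add: card_bits)
  also have "\<dots> = real n" by (rule log_pow_cancel) auto
  finally show "\<lceil>log 2 (real (max (card (bits n)) (card (bits n))))\<rceil> = int n" by simp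
qed

theorem theorem5p19:
  shows "\<exists>F :: nat \<Rightarrow> bool list \<Rightarrow> bool list \<Rightarrow> bool.
     (\<exists>C N0. \<forall>n\<ge>N0. PPcost (bits n) (bits n) (F n) \<le> C * log 2 (real n)) \<and>
     (\<exists>c>0. \<exists>N0. \<forall>n\<ge>N0. 2 powr (c * real n) \<le> 1 / rect (bits n) (bits n) (F n)) \<and>
     (\<exists>c>0. \<exists>N0. \<forall>n\<ge>N0. ereal (c * real n) \<le> ereal_of_enat (DNP (bits n) (bits n) (F n))) \<and>
     \<not> (\<forall>(Xs :: nat \<Rightarrow> bool list set) (Ys :: nat \<Rightarrow> bool list set) G.
           in_PP Xs Ys G \<longrightarrow> in_PNP Xs Ys G)"
proof (intro exI[of _ Fh] conjI)
  show "\<exists>C N0. \<forall>n\<ge>N0. PPcost (bits n) (bits n) (Fh n) \<le> C * log 2 (real n)"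
    using PP_Fh_log by blast
  show "\<exists>c>0. \<exists>N0. \<forall>n\<ge>N0. 2 powr (c * real n) \<le> 1 / rect (bits n) (bits n) (Fh n)"
    using rect_Fh_exp by (intro exI[of _ "1/10"]) auto
  show "\<exists>c>0. \<exists>N0. \<forall>n\<ge>N0. ereal (c * real n) \<le> ereal_of_enat (DNP (bits n) (bits n) (Fh n))"
    using DNP_Fh by (intro exI[of _ "1/50"]) auto
  have pp: "in_PP bits bits Fh"
  proof -
    have "\<forall>n\<ge>2. PPcost (bits n) (bits n) (Fh n) \<le> (6::real) * (log 2 (real n)) ^ (1::nat)"
      using PP_Fh_log by simp
    then show ?thesis using nbit_bits unfolding in_PP_def by blast
  qed
  have npnp: "\<not> in_PNP bits bits Fh"
  proof
    assume "in_PNP bits bits Fh"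
    then obtain C k where ck: "\<forall>n\<ge>2. ereal_of_enat (DNP (bits n) (bits n) (Fh n)) \<le> ereal (C * (log 2 (real n)) ^ k)"
      unfolding in_PNP_def by blast
    obtain n where n: "2 \<le> n" "C * (log 2 (real n))^k < 1/50 * real n" using polylog_small by blast
    have "ereal (1/50 * real n) \<le> ereal (C * (log 2 (real n)) ^ k)"
      by (rule order_trans[OF DNP_Fh[of n] ck[rule_format, OF n(1)]])
    then show False using n(2) by simp
  qed
  show "\<not> (\<forall>(Xs :: nat \<Rightarrow> bool list set) (Ys :: nat \<Rightarrow> bool list set) G.
           in_PP Xs Ys G \<longrightarrow> in_PNP Xs Ys G)"
    using pp npnp by blast
qed

end
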